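(* Let $H=(Q,\pi,f_0,f_1)$ satisfy Assumptions A1 and A2 and assume that the distribution function of $(f_1/f_0)(X_1)$ is continuous and strictly increasing. For each $N$ define $g(x)=g_N(x)=\sup\{\mathrm{mTDR}_H(\psi):\mathrm{mFDR}_H(\psi)\le x\}$, the supremum over all multiple testing procedures $\psi$ based on $X=(X_1,\dots,X_N)$. Then for any sequences $x_N,y_N$ with $|x_N-y_N|\to0$, $$|g_N(x_N)-g_N(y_N)|\to0\quad\text{as }N\to\infty.$$
   Context: Two-state HMM: $\mu$ Lebesgue on $\mathbb R$ or counting on $\mathbb Z$; under $\Pi_H$, $\theta=(\theta_n)_{n\le N}$ is a Markov chain on $\{0,1\}$ (initial law $\pi$, transition $Q$) and given $\theta$ the $X_n$ are independent with $\mu$-densities $f_{\theta_n}$; $E_H$ denotes expectation. Assumption A1: (i) some $\nu>0$ has $\max_jE_{X\sim f_j}|X|^\nu<\infty$; (ii) some $x^*\in\mathbb R\cup\{\pm\infty\}$ has $f_1/f_0\to\infty$ as $x\uparrow x^*$ or as $x\downarrow x^*$ (conventions $1/0=\infty,0/0=0$). Assumption A2: $Q$ has distinct rows, $\min_{ij}Q_{ij}>0$, $\pi$ invariant for $Q$. A multiple testing procedure is a measurable map $X\mapsto\psi(X)\in\{0,1\}^N$ (possibly depending on $H$). $\mathrm{mTDR}_H(\psi)=\frac{E_H\#\{i:\theta_i=1,\psi_i=1\}}{E_H\#\{i:\theta_i=1\}}$, $\mathrm{mFDR}_H(\psi)=\frac{E_H\#\{i:\theta_i=0,\psi_i=1\}}{E_H\#\{i:\psi_i=1\}}$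 with $0/0=0$. *)

theory Defs
  imports "HOL-Probability.Probability"
begin

text \<open>States are the naturals 0 and 1;
  \<open>p0\<close> is the initial law, \<open>Q\<close> the transition matrix, \<open>f j\<close> the
  \<open>mu\<close>-density of an observation in state j.  Observations are indexed
  0, ..., N-1 (the paper's 1, ..., N).\<close>

definition obs_measure :: "bool \<Rightarrow> real measure" where
  "obs_measure disc = (if disc then count_space \<int> else lborel)"

definition LR :: "(nat \<Rightarrow> real \<Rightarrow> real) \<Rightarrow> real \<Rightarrow> ereal" where
  "LR f x = (if f 0 x = 0 then (if f 1 x = 0 then 0 else \<infinity>) else ereal (f 1 x / f 0 x))"

definition is_density :: "bool \<Rightarrow> (real \<Rightarrow> real) \<Rightarrow> bool" where
  "is_density disc h \<longleftrightarrow> h \<in> borel_measurable (obs_measure disc) \<and> (\<forall>x. 0 \<le> h x)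
     \<and> (\<integral>\<^sup>+ x. ennreal (h x) \<partial>obs_measure disc) = 1"

definition A1 :: "bool \<Rightarrow> (nat \<Rightarrow> real \<Rightarrow> real) \<Rightarrow> bool" where
  "A1 disc f \<longleftrightarrow>
     (\<exists>\<nu>>0. \<forall>j\<in>{0,1::nat}. (\<integral>\<^sup>+ x. ennreal (f j x * \<bar>x\<bar> powr \<nu>) \<partial>obs_measure disc) < \<infinity>) \<and>
     (\<exists>xs::ereal.
        (case xs of
           ereal a \<Rightarrow> \<not> disc \<and> (((LR f) \<longlongrightarrow> \<infinity>) (at_left a) \<or> ((LR f) \<longlongrightarrow> \<infinity>) (at_right a))
         | PInfty \<Rightarrow> ((LR f) \<longlongrightarrow> \<infinity>) (inf at_top (principal (space (obs_measure disc))))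
         | MInfty \<Rightarrow> ((LR f) \<longlongrightarrow> \<infinity>) (inf at_bot (principal (space (obs_measure disc))))))"

text \<open>Assumption A2 (together with: Q is a stochastic matrix, p0 a probability vector).\<close>
definition A2 :: "(nat \<Rightarrow> nat \<Rightarrow> real) \<Rightarrow> (nat \<Rightarrow> real) \<Rightarrow> bool" where
  "A2 Q p0 \<longleftrightarrow>
     (\<forall>i\<in>{0,1}. \<forall>j\<in>{0,1}. Q i j > 0) \<and> (\<forall>i\<in>{0,1}. Q i 0 + Q i 1 = 1) \<and>
     (Q 0 0 \<noteq> Q 1 0 \<or> Q 0 1 \<noteq> Q 1 1) \<and>
     (\<forall>j\<in>{0,1}. 0 \<le> p0 j) \<and> p0 0 + p0 1 = 1 \<and>
     (\<forall>j\<in>{0,1}. p0 j = p0 0 * Q 0 j + p0 1 * Q 1 j)"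

text \<open>Distribution function of (f1/f0)(X_1); X_1 has density pi0 f0 + pi1 f1.\<close>
definition LR_cdf :: "bool \<Rightarrow> (nat \<Rightarrow> real) \<Rightarrow> (nat \<Rightarrow> real \<Rightarrow> real) \<Rightarrow> real \<Rightarrow> real" where
  "LR_cdf disc p0 f t = (\<Sum>j\<in>{0,1::nat}. p0 j *
      enn2real (\<integral>\<^sup>+ x. ennreal (f j x) * indicator {y. LR f y \<le> ereal t} x \<partial>obs_measure disc))"

definition states :: "nat \<Rightarrow> (nat \<Rightarrow> nat) set" where
  "states N = PiE {..<N} (\<lambda>_. {0,1})"

definition obs_space :: "bool \<Rightarrow> nat \<Rightarrow> (nat \<Rightarrow> real) measure" where
  "obs_space disc N = PiM {..<N} (\<lambda>_. obs_measure disc)"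

text \<open>Joint density of (theta, X) w.r.t. counting measure times mu^N.\<close>
definition hmm_dens :: "(nat \<Rightarrow> real) \<Rightarrow> (nat \<Rightarrow> nat \<Rightarrow> real) \<Rightarrow> (nat \<Rightarrow> real \<Rightarrow> real) \<Rightarrow> nat
    \<Rightarrow> (nat \<Rightarrow> nat) \<Rightarrow> (nat \<Rightarrow> real) \<Rightarrow> real" where
  "hmm_dens p0 Q f N \<theta> x =
     p0 (\<theta> 0) * (\<Prod>n\<in>{1..<N}. Q (\<theta> (n - 1)) (\<theta> n)) * (\<Prod>n<N. f (\<theta> n) (x n))"

text \<open>A (non-randomised) multiple testing procedure: measurable map X \<mapsto> psi(X) \<in> {0,1}^N.\<close>
definition is_mtp :: "bool \<Rightarrow> nat \<Rightarrow> ((nat \<Rightarrow> real) \<Rightarrow> nat \<Rightarrow> bool) \<Rightarrow> bool" where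
  "is_mtp disc N \<psi> \<longleftrightarrow> (\<forall>i<N. (\<lambda>x. \<psi> x i) \<in> measurable (obs_space disc N) (count_space UNIV))"

text \<open>\<open>exp_count \<dots> \<psi> A\<close> = E_H #{i : theta_i \<in> A, psi_i = 1}.\<close>
definition exp_count :: "bool \<Rightarrow> (nat \<Rightarrow> real) \<Rightarrow> (nat \<Rightarrow> nat \<Rightarrow> real) \<Rightarrow> (nat \<Rightarrow> real \<Rightarrow> real)
    \<Rightarrow> nat \<Rightarrow> ((nat \<Rightarrow> real) \<Rightarrow> nat \<Rightarrow> bool) \<Rightarrow> nat set \<Rightarrow> real" where
  "exp_count disc p0 Q f N \<psi> A =
     (\<Sum>i<N. \<Sum>\<theta>\<in>states N. if \<theta> i \<in> A then
        (\<integral>x. hmm_dens p0 Q f N \<theta> x * indicator {y. \<psi> y i} x \<partial>obs_space disc N) else 0)"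

definition mTDR :: "bool \<Rightarrow> (nat \<Rightarrow> real) \<Rightarrow> (nat \<Rightarrow> nat \<Rightarrow> real) \<Rightarrow> (nat \<Rightarrow> real \<Rightarrow> real)
    \<Rightarrow> nat \<Rightarrow> ((nat \<Rightarrow> real) \<Rightarrow> nat \<Rightarrow> bool) \<Rightarrow> real" where
  "mTDR disc p0 Q f N \<psi> =
     exp_count disc p0 Q f N \<psi> {1} / exp_count disc p0 Q f N (\<lambda>_ _. True) {1}"

definition mFDR :: "bool \<Rightarrow> (nat \<Rightarrow> real) \<Rightarrow> (nat \<Rightarrow> nat \<Rightarrow> real) \<Rightarrow> (nat \<Rightarrow> real \<Rightarrow> real)
    \<Rightarrow> nat \<Rightarrow> ((nat \<Rightarrow> real) \<Rightarrow> nat \<Rightarrow> bool) \<Rightarrow> real" where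
  "mFDR disc p0 Q f N \<psi> =
     exp_count disc p0 Q f N \<psi> {0} / exp_count disc p0 Q f N \<psi> {0,1}"

definition opt_TDR :: "bool \<Rightarrow> (nat \<Rightarrow> real) \<Rightarrow> (nat \<Rightarrow> nat \<Rightarrow> real) \<Rightarrow> (nat \<Rightarrow> real \<Rightarrow> real)
    \<Rightarrow> nat \<Rightarrow> real \<Rightarrow> real" where
  "opt_TDR disc p0 Q f N t =
     Sup (mTDR disc p0 Q f N ` {\<psi>. is_mtp disc N \<psi> \<and> mFDR disc p0 Q f N \<psi> \<le> t})"

end

theory Submission
  imports Defs
begin

locale hmmL =
  fixes disc :: bool and p0 :: "nat \<Rightarrow> real" and Q :: "nat \<Rightarrow> nat \<Rightarrow> real"
    and f :: "nat \<Rightarrow> real \<Rightarrow> real"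
  assumes dens: "\<forall>j\<in>{0,1::nat}. is_density disc (f j)"
    and A2: "A2 Q p0"
begin

definition wt :: "nat \<Rightarrow> (nat \<Rightarrow> nat) \<Rightarrow> real" where
  "wt N \<theta> = p0 (\<theta> 0) * (\<Prod>n\<in>{1..<N}. Q (\<theta> (n - 1)) (\<theta> n))"

lemma Qpos: "i \<in> {0,1} \<Longrightarrow> j \<in> {0,1} \<Longrightarrow> Q i j > 0"
  using A2 unfolding A2_def by blast
lemma Qsum: "i \<in> {0,1} \<Longrightarrow> Q i 0 + Q i 1 = 1"
  using A2 unfolding A2_def by blast
lemma p0sum: "p0 0 + p0 1 = 1" using A2 unfolding A2_def by blast
lemma p0stat: "j \<in> {0,1} \<Longrightarrow> p0 j = p0 0 * Q 0 j + p0 1 * Q 1 j"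
  using A2 unfolding A2_def by blast
lemma p0nn: "j \<in> {0,1} \<Longrightarrow> 0 \<le> p0 j" using A2 unfolding A2_def by blast
lemma p0pos: "j \<in> {0,1} \<Longrightarrow> 0 < p0 j"
proof -
  assume j: "j \<in> {0,1}"
  have "p0 j = p0 0 * Q 0 j + p0 1 * Q 1 j" using p0stat j by blast
  moreover have "p0 0 * Q 0 j + p0 1 * Q 1 j > 0"
  proof (cases "p0 0 > 0")
    case True then show ?thesis using Qpos[of 0 j] Qpos[of 1 j] j p0nn[of 1]
      by (simp add: add_pos_nonneg)
  next
    case False then have "p0 1 > 0" using p0sum p0nn[of 0] by auto
    then show ?thesis using Qpos[of 0 j] Qpos[of 1 j] j p0nn[of 0]
      by (simp add: add_nonneg_pos)
  qed
  ultimately show ?thesis by simp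
qed
lemma Qle1: "i \<in> {0,1} \<Longrightarrow> j \<in> {0,1} \<Longrightarrow> Q i j \<le> 1"
  using Qsum[of i] Qpos[of i 0] Qpos[of i 1] by auto
lemma p0le1: "j \<in> {0,1} \<Longrightarrow> p0 j \<le> 1"
  using p0sum p0nn[of 0] p0nn[of 1] by auto

lemma states_Suc_sum:
  "(\<Sum>\<theta>\<in>states (Suc N). F \<theta>) = (\<Sum>\<theta>\<in>states N. \<Sum>s\<in>{0,1::nat}. F (\<theta>(N := s)))"
proof -
  have e: "states (Suc N) = (\<lambda>(y, g). g(N := y)) ` ({0,1} \<times> states N)"
    unfolding states_def lessThan_Suc by (rule PiE_insert_eq)
  have inj: "inj_on (\<lambda>(y, g). g(N := y)) ({0,1::nat} \<times> states N)"
    unfolding states_def by (rule inj_combinator) auto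
  have "(\<Sum>\<theta>\<in>states (Suc N). F \<theta>) = (\<Sum>p\<in>{0,1} \<times> states N. F ((\<lambda>(y, g). g(N := y)) p))"
    unfolding e by (rule sum.reindex[OF inj, unfolded comp_def])
  also have "\<dots> = (\<Sum>s\<in>{0,1::nat}. \<Sum>\<theta>\<in>states N. F (\<theta>(N := s)))"
    unfolding sum.cartesian_product by (simp add: case_prod_unfold)
  also have "\<dots> = (\<Sum>\<theta>\<in>states N. \<Sum>s\<in>{0,1::nat}. F (\<theta>(N := s)))"
    by (rule sum.swap)
  finally show ?thesis .
qed

lemma states_val: "\<theta> \<in> states N \<Longrightarrow> n < N \<Longrightarrow> \<theta> n \<in> {0,1}"
  unfolding states_def by auto

lemma finite_states: "finite (states N)"
  unfolding states_def by (rule finite_PiE) auto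

lemma wt_Suc: "N \<ge> 1 \<Longrightarrow> wt (Suc N) (\<theta>(N := s)) = wt N \<theta> * Q (\<theta> (N - 1)) s"
proof -
  assume N: "N \<ge> 1"
  have e: "{1..<Suc N} = insert N {1..<N}" using N by auto
  have a: "(\<Prod>n\<in>{1..<Suc N}. Q ((\<theta>(N := s)) (n - 1)) ((\<theta>(N := s)) n))
     = Q ((\<theta>(N := s)) (N - 1)) s * (\<Prod>n\<in>{1..<N}. Q ((\<theta>(N := s)) (n - 1)) ((\<theta>(N := s)) n))"
    unfolding e by simp
  have b: "(\<Prod>n\<in>{1..<N}. Q ((\<theta>(N := s)) (n - 1)) ((\<theta>(N := s)) n)) = (\<Prod>n\<in>{1..<N}. Q (\<theta> (n - 1)) (\<theta> n))"
    by (rule prod.cong) auto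
  have c: "(\<theta>(N := s)) (N - 1) = \<theta> (N - 1)" "(\<theta>(N := s)) 0 = \<theta> 0" using N by auto
  show ?thesis unfolding wt_def a b c by simp
qed

lemma wt_nonneg: "\<theta> \<in> states N \<Longrightarrow> N \<ge> 1 \<Longrightarrow> 0 \<le> wt N \<theta>"
proof -
  assume th: "\<theta> \<in> states N" and N: "N \<ge> 1"
  have "0 \<le> p0 (\<theta> 0)" using p0nn states_val[OF th, of 0] N by auto
  moreover have "0 \<le> (\<Prod>n\<in>{1..<N}. Q (\<theta> (n - 1)) (\<theta> n))"
  proof (rule prod_nonneg)
    fix n assume n: "n \<in> {1..<N}"
    have "n - 1 < N" "n < N" using n by auto
    then have "\<theta> (n - 1) \<in> {0,1}" "\<theta> n \<in> {0,1}" using states_val[OF th] by auto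
    then show "0 \<le> Q (\<theta> (n - 1)) (\<theta> n)" using Qpos less_imp_le by blast
  qed
  ultimately show ?thesis unfolding wt_def by simp
qed


lemma states_0: "states 0 = {\<lambda>_. undefined}"
  unfolding states_def by simp

lemma marg_last: "N \<ge> 1 \<Longrightarrow> j \<in> {0,1} \<Longrightarrow>
  (\<Sum>\<theta>\<in>states N. if \<theta> (N - 1) = j then wt N \<theta> else 0) = p0 j"
proof (induction N arbitrary: j rule: nat_induct_at_least)
  case base
  have "(\<Sum>\<theta>\<in>states (Suc 0). if \<theta> (Suc 0 - 1) = j then wt (Suc 0) \<theta> else 0)
     = (\<Sum>s\<in>{0,1::nat}. if s = j then p0 s else 0)"
    unfolding states_Suc_sum states_0 by (simp add: wt_def)
  also have "\<dots> = p0 j" using base by auto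
  finally show ?case unfolding One_nat_def by simp
next
  case (Suc N)
  have "(\<Sum>\<theta>\<in>states (Suc N). if \<theta> (Suc N - 1) = j then wt (Suc N) \<theta> else 0)
     = (\<Sum>\<theta>\<in>states N. \<Sum>s\<in>{0,1::nat}. if s = j then wt N \<theta> * Q (\<theta> (N - 1)) s else 0)"
    unfolding states_Suc_sum using Suc by (simp add: wt_Suc)
  also have "\<dots> = (\<Sum>\<theta>\<in>states N. wt N \<theta> * Q (\<theta> (N - 1)) j)"
    using Suc.prems by (intro sum.cong) auto
  also have "\<dots> = (\<Sum>\<theta>\<in>states N. \<Sum>k\<in>{0,1::nat}. (if \<theta> (N - 1) = k then wt N \<theta> else 0) * Q k j)"
  proof (rule sum.cong)
    fix \<theta> assume "\<theta> \<in> states N"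
    then have "\<theta> (N - 1) \<in> {0,1}" using states_val Suc by auto
    then show "wt N \<theta> * Q (\<theta> (N - 1)) j = (\<Sum>k\<in>{0,1::nat}. (if \<theta> (N - 1) = k then wt N \<theta> else 0) * Q k j)"
      by auto
  qed simp
  also have "\<dots> = (\<Sum>k\<in>{0,1::nat}. (\<Sum>\<theta>\<in>states N. if \<theta> (N - 1) = k then wt N \<theta> else 0) * Q k j)"
    by (subst sum.swap) (simp add: sum_distrib_right)
  also have "\<dots> = (\<Sum>k\<in>{0,1::nat}. p0 k * Q k j)"
    using Suc by (intro sum.cong) auto
  also have "\<dots> = p0 j" using p0stat[OF Suc.prems] by simp
  finally show ?case .
qed

lemma marg: "i < N \<Longrightarrow> j \<in> {0,1} \<Longrightarrow>
  (\<Sum>\<theta>\<in>states N. if \<theta> i = j then wt N \<theta> else 0) = p0 j"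
proof (induction N)
  case 0 then show ?case by simp
next
  case (Suc N)
  show ?case
  proof (cases "i = N")
    case True then show ?thesis using marg_last[of "Suc N" j] Suc.prems by simp
  next
    case False
    then have iN: "i < N" using Suc.prems by simp
    have "(\<Sum>\<theta>\<in>states (Suc N). if \<theta> i = j then wt (Suc N) \<theta> else 0)
     = (\<Sum>\<theta>\<in>states N. \<Sum>s\<in>{0,1::nat}. if \<theta> i = j then wt N \<theta> * Q (\<theta> (N - 1)) s else 0)"
    proof -
      have N1: "N \<ge> 1" using iN by simp
      have w: "wt (Suc N) (\<theta>(N := s)) = wt N \<theta> * Q (\<theta> (N - 1)) s" for \<theta> s
        using wt_Suc[OF N1] by blast
      have u: "(\<theta>(N := s)) i = \<theta> i" for \<theta> :: "nat \<Rightarrow> nat" and s using iN by simp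
      show ?thesis unfolding states_Suc_sum w u by simp
    qed
    also have "\<dots> = (\<Sum>\<theta>\<in>states N. if \<theta> i = j then wt N \<theta> else 0)"
    proof (rule sum.cong)
      fix \<theta> assume "\<theta> \<in> states N"
      then have "\<theta> (N - 1) \<in> {0,1}" using states_val iN by auto
      then have "Q (\<theta> (N - 1)) 0 + Q (\<theta> (N - 1)) 1 = 1" by (rule Qsum)
      then show "(\<Sum>s\<in>{0,1::nat}. if \<theta> i = j then wt N \<theta> * Q (\<theta> (N - 1)) s else 0)
        = (if \<theta> i = j then wt N \<theta> else 0)"
        by (simp add: distrib_left[symmetric])
    qed simp
    also have "\<dots> = p0 j" using Suc.IH iN Suc.prems by simp
    finally show ?thesis .
  qed
qed

lemma wt_total: "N \<ge> 1 \<Longrightarrow> (\<Sum>\<theta>\<in>states N. wt N \<theta>) = 1"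
proof -
  assume N: "N \<ge> 1"
  have "(\<Sum>\<theta>\<in>states N. wt N \<theta>) = (\<Sum>\<theta>\<in>states N. \<Sum>j\<in>{0,1::nat}. if \<theta> 0 = j then wt N \<theta> else 0)"
  proof (rule sum.cong)
    fix \<theta> assume "\<theta> \<in> states N"
    then have "\<theta> 0 \<in> {0,1}" using states_val N by auto
    then show "wt N \<theta> = (\<Sum>j\<in>{0,1::nat}. if \<theta> 0 = j then wt N \<theta> else 0)" by auto
  qed simp
  also have "\<dots> = (\<Sum>j\<in>{0,1::nat}. p0 j)"
    by (subst sum.swap) (use marg[of 0 N] N in \<open>auto\<close>)
  also have "\<dots> = 1" using p0sum by simp
  finally show ?thesis .
qed


definition qmin :: real where "qmin = Min {p0 0, p0 1, Q 0 0, Q 0 1, Q 1 0, Q 1 1}"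

lemma qmin_pos: "qmin > 0"
  unfolding qmin_def using p0pos[of 0] p0pos[of 1] Qpos[of 0 0] Qpos[of 0 1] Qpos[of 1 0] Qpos[of 1 1]
  by simp

lemma qmin_le_p0: "j \<in> {0,1} \<Longrightarrow> qmin \<le> p0 j"
  unfolding qmin_def by auto
lemma qmin_le_Q: "i \<in> {0,1} \<Longrightarrow> j \<in> {0,1} \<Longrightarrow> qmin \<le> Q i j"
  unfolding qmin_def by auto
lemma qmin_le1: "qmin \<le> 1" using qmin_le_p0[of 0] p0le1[of 0] by simp

definition Kc :: real where "Kc = 1 / qmin ^ 3"
lemma Kc_pos: "Kc > 0" unfolding Kc_def using qmin_pos by simp

lemma states_upd: "\<theta> \<in> states N \<Longrightarrow> i < N \<Longrightarrow> k \<in> {0,1} \<Longrightarrow> \<theta>(i := k) \<in> states N"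
  unfolding states_def by (auto simp: PiE_iff extensional_def)

lemma wt_ratio:
  assumes th: "\<theta> \<in> states N" and i: "i < N" and k: "k \<in> {0,1}"
  shows "wt N \<theta> \<le> Kc * wt N (\<theta>(i := k))"
proof -
  define \<theta>' where "\<theta>' = \<theta>(i := k)"
  have th': "\<theta>' \<in> states N" unfolding \<theta>'_def using states_upd th i k .
  define A where "A = {1..<N}"
  define B where "B = {n\<in>A. n = i \<or> n = Suc i}"
  define g :: "(nat \<Rightarrow> nat) \<Rightarrow> nat \<Rightarrow> real" where "g = (\<lambda>\<eta> n. Q (\<eta> (n - 1)) (\<eta> n))"
  have BA: "B \<subseteq> A" unfolding B_def by auto
  have fA: "finite A" unfolding A_def by simp
  have split: "prod (g \<eta>) A = prod (g \<eta>) (A - B) * prod (g \<eta>) B" for \<eta>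
    using prod.subset_diff[OF BA fA] by simp
  have same: "prod (g \<theta>') (A - B) = prod (g \<theta>) (A - B)"
    by (rule prod.cong) (auto simp: g_def \<theta>'_def A_def B_def)
  have gval: "\<eta> \<in> states N \<Longrightarrow> n \<in> A \<Longrightarrow> qmin \<le> g \<eta> n \<and> g \<eta> n \<le> 1" for \<eta> n
    unfolding g_def A_def using states_val[of \<eta> N "n - 1"] states_val[of \<eta> N n]
    by (auto intro!: qmin_le_Q Qle1)
  define P where "P = prod (g \<theta>) (A - B)"
  have gnn: "\<eta> \<in> states N \<Longrightarrow> n \<in> A \<Longrightarrow> 0 \<le> g \<eta> n" for \<eta> n
    using gval[of \<eta> n] qmin_pos by linarith
  have P0: "0 \<le> P" unfolding P_def
    by (rule prod_nonneg) (use gnn[OF th] in blast)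
  have B1: "prod (g \<theta>) B \<le> 1"
    by (rule prod_le_1) (use gnn[OF th] gval[OF th] BA in blast)
  have cB: "card B \<le> 2"
  proof -
    have "B \<subseteq> {i, Suc i}" unfolding B_def by auto
    then have "card B \<le> card {i, Suc i}" by (rule card_mono[rotated]) simp
    then show ?thesis by simp
  qed
  have "qmin ^ 2 \<le> qmin ^ card B"
    by (rule power_decreasing[OF cB]) (use qmin_pos qmin_le1 in auto)
  also have "qmin ^ card B = prod (\<lambda>_. qmin) B" by simp
  also have "\<dots> \<le> prod (g \<theta>') B"
    by (rule prod_mono) (use gval[OF th'] BA qmin_pos less_imp_le in blast)
  finally have B2: "qmin ^ 2 \<le> prod (g \<theta>') B" .
  have N1: "0 < N" using i by simp
  have p1: "p0 (\<theta> 0) \<le> 1" using p0le1 states_val[OF th N1] .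
  have p2: "qmin \<le> p0 (\<theta>' 0)" using qmin_le_p0 states_val[OF th' N1] .
  have p1': "0 \<le> p0 (\<theta> 0)" using p0nn states_val[OF th N1] .
  have Bn: "0 \<le> prod (g \<theta>) B"
    by (rule prod_nonneg) (use gnn[OF th] BA in blast)
  have "wt N \<theta> = p0 (\<theta> 0) * (P * prod (g \<theta>) B)"
    unfolding wt_def P_def using split[of \<theta>] by (simp add: g_def A_def)
  also have "\<dots> \<le> 1 * (P * 1)"
    by (intro mult_mono p1 B1 P0 mult_nonneg_nonneg Bn) auto
  finally have le1: "wt N \<theta> \<le> P" by simp
  have "qmin * (P * qmin ^ 2) \<le> p0 (\<theta>' 0) * (P * prod (g \<theta>') B)"
    by (intro mult_mono p2 B2 mult_left_mono P0 mult_nonneg_nonneg) (use qmin_pos p2 in auto)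
  also have "\<dots> = wt N \<theta>'"
    unfolding wt_def P_def using split[of \<theta>'] same by (simp add: g_def A_def)
  finally have "qmin ^ 3 * P \<le> wt N \<theta>'" by (simp add: power3_eq_cube power2_eq_square mult_ac)
  then have "P \<le> Kc * wt N \<theta>'" unfolding Kc_def using qmin_pos
    by (simp add: field_simps)
  then show ?thesis using le1 unfolding \<theta>'_def by simp
qed
end

context hmmL begin

abbreviation "MM \<equiv> obs_measure disc"
abbreviation "SN N \<equiv> obs_space disc N"
abbreviation isP :: "nat \<Rightarrow> ((nat \<Rightarrow> real) \<Rightarrow> bool) \<Rightarrow> bool" where
  "isP N \<phi> \<equiv> \<phi> \<in> measurable (SN N) (count_space (UNIV::bool set))"

lemma sfM: "sigma_finite_measure MM"
proof (cases disc)
  case True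
  then show ?thesis unfolding obs_measure_def
    using sigma_finite_measure_count_space_countable[OF countable_int] by simp
next
  case False
  then show ?thesis unfolding obs_measure_def using sigma_finite_lborel by simp
qed

lemma f_meas[measurable]: "j \<in> {0,1} \<Longrightarrow> f j \<in> borel_measurable MM"
  using dens unfolding is_density_def by blast
lemma f_nn: "j \<in> {0,1} \<Longrightarrow> 0 \<le> f j x"
  using dens unfolding is_density_def by blast
lemma f_int: "j \<in> {0,1} \<Longrightarrow> (\<integral>\<^sup>+ x. ennreal (f j x) \<partial>MM) = 1"
  using dens unfolding is_density_def by blast

lemma hmm_eq: "hmm_dens p0 Q f N \<theta> x = wt N \<theta> * (\<Prod>n<N. f (\<theta> n) (x n))"
  unfolding hmm_dens_def wt_def by simp

definition mass :: "nat \<Rightarrow> real set \<Rightarrow> ennreal" where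
  "mass j B = (\<integral>\<^sup>+ z. ennreal (f j z) * indicator B z \<partial>MM)"

lemma mass_le1: "j \<in> {0,1} \<Longrightarrow> mass j B \<le> 1"
proof -
  assume j: "j \<in> {0,1}"
  have "mass j B \<le> (\<integral>\<^sup>+ z. ennreal (f j z) \<partial>MM)"
    unfolding mass_def by (intro nn_integral_mono) (auto simp: indicator_def)
  then show ?thesis using f_int[OF j] by simp
qed

definition massr :: "nat \<Rightarrow> real set \<Rightarrow> real" where
  "massr j B = enn2real (mass j B)"

lemma massr_nn: "0 \<le> massr j B" unfolding massr_def by simp
lemma massr_le1: "j \<in> {0,1} \<Longrightarrow> massr j B \<le> 1"
  unfolding massr_def using mass_le1[of j B] enn2real_mono[of "mass j B" 1] by simp
lemma mass_massr: "j \<in> {0,1} \<Longrightarrow> mass j B = ennreal (massr j B)"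
proof -
  assume j: "j \<in> {0,1}"
  have "mass j B \<noteq> \<top>" using mass_le1[OF j, of B] by (auto simp: top_unique)
  then show ?thesis unfolding massr_def by (simp add: ennreal_enn2real_if)
qed

lemma massr_space: "j \<in> {0,1} \<Longrightarrow> massr j (space MM) = 1"
proof -
  assume j: "j \<in> {0,1}"
  have "mass j (space MM) = (\<integral>\<^sup>+ z. ennreal (f j z) \<partial>MM)"
    unfolding mass_def by (intro nn_integral_cong) (auto simp: indicator_def)
  then show ?thesis using f_int[OF j] unfolding massr_def by simp
qed

lemma comp_meas:
  assumes "\<theta> \<in> states N" "n < N"
  shows "(\<lambda>x. f (\<theta> n) (x n)) \<in> borel_measurable (SN N)"
proof -
  have t: "\<theta> n \<in> {0,1}" using states_val assms by blast
  have c: "(\<lambda>x. x n) \<in> measurable (SN N) MM"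
    unfolding obs_space_def by (rule measurable_component_singleton) (use assms in simp)
  show ?thesis by (rule measurable_compose[OF c f_meas[OF t]])
qed

lemma hmm_meas:
  assumes "\<theta> \<in> states N"
  shows "(\<lambda>x. hmm_dens p0 Q f N \<theta> x) \<in> borel_measurable (SN N)"
  unfolding hmm_eq
  by (intro borel_measurable_times borel_measurable_const borel_measurable_prod comp_meas[OF assms]) simp

lemma hmm_nn: "\<theta> \<in> states N \<Longrightarrow> N \<ge> 1 \<Longrightarrow> 0 \<le> hmm_dens p0 Q f N \<theta> x"
  unfolding hmm_eq
  by (intro mult_nonneg_nonneg wt_nonneg prod_nonneg f_nn) (auto dest: states_val)

lemma PSF: "product_sigma_finite (\<lambda>_::nat. MM)"
  unfolding product_sigma_finite_def using sfM by simp

lemma nn_coord: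
  assumes th: "\<theta> \<in> states N" and i: "i < N" and B: "B \<in> sets MM"
  shows "(\<integral>\<^sup>+x. ennreal (hmm_dens p0 Q f N \<theta> x * indicator {y. y i \<in> B} x) \<partial>SN N)
    = ennreal (wt N \<theta>) * mass (\<theta> i) B"
proof -
  interpret P: product_sigma_finite "\<lambda>_::nat. MM" by (rule PSF)
  have N1: "N \<ge> 1" using i by simp
  have tv: "n < N \<Longrightarrow> \<theta> n \<in> {0,1}" for n using states_val[OF th] .
  define g where "g = (\<lambda>n z. ennreal (f (\<theta> n) z) * (if n = i then indicator B z else 1))"
  have gm: "g n \<in> borel_measurable MM" if n: "n \<in> {..<N}" for n
  proof -
    have [measurable]: "f (\<theta> n) \<in> borel_measurable MM" using f_meas tv n by simp
    show ?thesis unfolding g_def using B by measurable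
  qed
  have pw: "ennreal (hmm_dens p0 Q f N \<theta> x * indicator {y. y i \<in> B} x)
      = ennreal (wt N \<theta>) * (\<Prod>n\<in>{..<N}. g n (x n))" for x
  proof (cases "x i \<in> B")
    case True
    have "(\<Prod>n\<in>{..<N}. g n (x n)) = (\<Prod>n\<in>{..<N}. ennreal (f (\<theta> n) (x n)))"
      unfolding g_def using True by (intro prod.cong) auto
    also have "\<dots> = ennreal (\<Prod>n\<in>{..<N}. f (\<theta> n) (x n))"
      by (rule prod_ennreal) (use f_nn tv in auto)
    moreover have "0 \<le> (\<Prod>n\<in>{..<N}. f (\<theta> n) (x n))"
      by (rule prod_nonneg) (use f_nn tv in auto)
    ultimately show ?thesis using True unfolding hmm_eq
      by (simp add: ennreal_mult wt_nonneg[OF th N1])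
  next
    case False
    have "(\<Prod>n\<in>{..<N}. g n (x n)) = 0"
      by (rule prod_zero) (use False i in \<open>auto simp: g_def\<close>)
    then show ?thesis using False by simp
  qed
  have "(\<integral>\<^sup>+x. ennreal (hmm_dens p0 Q f N \<theta> x * indicator {y. y i \<in> B} x) \<partial>SN N)
      = (\<integral>\<^sup>+x. ennreal (wt N \<theta>) * (\<Prod>n\<in>{..<N}. g n (x n)) \<partial>SN N)"
    by (simp add: pw)
  also have "\<dots> = ennreal (wt N \<theta>) * (\<integral>\<^sup>+x. (\<Prod>n\<in>{..<N}. g n (x n)) \<partial>SN N)"
  proof (rule nn_integral_cmult)
    show "(\<lambda>x. \<Prod>n\<in>{..<N}. g n (x n)) \<in> borel_measurable (SN N)"
    proof (rule borel_measurable_prod_ennreal)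
      fix n assume n: "n \<in> {..<N}"
      have c: "(\<lambda>x. x n) \<in> measurable (SN N) MM"
        unfolding obs_space_def by (rule measurable_component_singleton) (use n in simp)
      show "(\<lambda>x. g n (x n)) \<in> borel_measurable (SN N)"
        by (rule measurable_compose[OF c gm[OF n]])
    qed
  qed
  also have "(\<integral>\<^sup>+x. (\<Prod>n\<in>{..<N}. g n (x n)) \<partial>SN N) = (\<Prod>n\<in>{..<N}. integral\<^sup>N MM (g n))"
    unfolding obs_space_def by (rule P.product_nn_integral_prod) (use gm in auto)
  also have "\<dots> = integral\<^sup>N MM (g i) * (\<Prod>n\<in>{..<N} - {i}. integral\<^sup>N MM (g n))"
    by (rule prod.remove) (use i in auto)
  also have "(\<Prod>n\<in>{..<N} - {i}. integral\<^sup>N MM (g n)) = 1"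
  proof (rule prod.neutral, rule ballI)
    fix n assume n: "n \<in> {..<N} - {i}"
    then have "integral\<^sup>N MM (g n) = (\<integral>\<^sup>+ z. ennreal (f (\<theta> n) z) \<partial>MM)"
      unfolding g_def by simp
    then show "integral\<^sup>N MM (g n) = 1" using f_int tv n by simp
  qed
  also have "integral\<^sup>N MM (g i) = mass (\<theta> i) B"
    unfolding g_def mass_def by simp
  finally show ?thesis by simp
qed

lemma space_SN: "x \<in> space (SN N) \<Longrightarrow> n < N \<Longrightarrow> x n \<in> space MM"
  unfolding obs_space_def by (auto simp: space_PiM PiE_iff)

lemma comp_pred: "n < N \<Longrightarrow> B \<in> sets MM \<Longrightarrow> isP N (\<lambda>y. y n \<in> B)"
proof -
  assume n: "n < N" and B: "B \<in> sets MM"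
  have c: "(\<lambda>x. x n) \<in> measurable (SN N) MM"
    unfolding obs_space_def by (rule measurable_component_singleton) (use n in simp)
  show ?thesis by (rule pred_sets2[OF B c])
qed

lemma hmm_int:
  assumes th: "\<theta> \<in> states N" and N1: "N \<ge> 1"
  shows "integrable (SN N) (hmm_dens p0 Q f N \<theta>)"
proof (rule integrableI_nonneg)
  show "hmm_dens p0 Q f N \<theta> \<in> borel_measurable (SN N)" using hmm_meas[OF th] by simp
  show "AE x in SN N. 0 \<le> hmm_dens p0 Q f N \<theta> x" using hmm_nn[OF th N1] by simp
  have "(\<integral>\<^sup>+x. ennreal (hmm_dens p0 Q f N \<theta> x) \<partial>SN N)
     = (\<integral>\<^sup>+x. ennreal (hmm_dens p0 Q f N \<theta> x * indicator {y. y 0 \<in> space MM} x) \<partial>SN N)"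
    by (intro nn_integral_cong) (use space_SN N1 in \<open>auto simp: indicator_def\<close>)
  also have "\<dots> = ennreal (wt N \<theta>) * mass (\<theta> 0) (space MM)"
    using nn_coord[OF th, of 0 "space MM"] N1 by simp
  also have "\<dots> < \<infinity>"
  proof -
    have "mass (\<theta> 0) (space MM) \<le> 1" using mass_le1 states_val[OF th, of 0] N1 by simp
    then have "mass (\<theta> 0) (space MM) < \<top>" using ennreal_one_less_top le_less_trans by blast
    then show ?thesis by (simp add: ennreal_mult_less_top)
  qed
  finally show "(\<integral>\<^sup>+x. ennreal (hmm_dens p0 Q f N \<theta> x) \<partial>SN N) < \<infinity>" .
qed

definition Pr :: "nat \<Rightarrow> (nat \<Rightarrow> nat) \<Rightarrow> ((nat \<Rightarrow> real) \<Rightarrow> bool) \<Rightarrow> real" where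
  "Pr N \<theta> \<phi> = (\<integral>x. hmm_dens p0 Q f N \<theta> x * indicator {y. \<phi> y} x \<partial>SN N)"

lemma ind_int:
  assumes th: "\<theta> \<in> states N" and N1: "N \<ge> 1" and ph: "isP N \<phi>"
  shows "integrable (SN N) (\<lambda>x. hmm_dens p0 Q f N \<theta> x * indicator {y. \<phi> y} x)"
proof -
  have A: "{y \<in> space (SN N). \<phi> y} \<in> sets (SN N)" using predE[OF ph] .
  have "integrable (SN N) (\<lambda>x. indicator {y \<in> space (SN N). \<phi> y} x *\<^sub>R hmm_dens p0 Q f N \<theta> x)"
    by (rule integrable_mult_indicator[OF A hmm_int[OF th N1]])
  moreover have "integrable (SN N) (\<lambda>x. indicator {y \<in> space (SN N). \<phi> y} x *\<^sub>R hmm_dens p0 Q f N \<theta> x)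
     \<longleftrightarrow> integrable (SN N) (\<lambda>x. hmm_dens p0 Q f N \<theta> x * indicator {y. \<phi> y} x)"
    by (rule Bochner_Integration.integrable_cong) (auto simp: indicator_def)
  ultimately show ?thesis by simp
qed

lemma Pr_nonneg: "\<theta> \<in> states N \<Longrightarrow> N \<ge> 1 \<Longrightarrow> 0 \<le> Pr N \<theta> \<phi>"
  unfolding Pr_def by (rule Bochner_Integration.integral_nonneg, rule mult_nonneg_nonneg) (auto intro: hmm_nn)

lemma Pr_mono:
  assumes th: "\<theta> \<in> states N" and N1: "N \<ge> 1" and ph: "isP N \<phi>" and ph': "isP N \<phi>'"
    and imp: "\<And>x. x \<in> space (SN N) \<Longrightarrow> \<phi> x \<Longrightarrow> \<phi>' x"
  shows "Pr N \<theta> \<phi> \<le> Pr N \<theta> \<phi>'"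
  unfolding Pr_def
proof (rule Bochner_Integration.integral_mono[OF ind_int[OF th N1 ph] ind_int[OF th N1 ph']])
  fix x assume "x \<in> space (SN N)"
  then show "hmm_dens p0 Q f N \<theta> x * indicator {y. \<phi> y} x \<le> hmm_dens p0 Q f N \<theta> x * indicator {y. \<phi>' y} x"
    using imp hmm_nn[OF th N1, of x] by (auto simp: indicator_def)
qed

lemma Pr_sub:
  assumes th: "\<theta> \<in> states N" and N1: "N \<ge> 1" and ph: "isP N \<phi>"
    and ph1: "isP N \<phi>1" and ph2: "isP N \<phi>2"
    and imp: "\<And>x. x \<in> space (SN N) \<Longrightarrow> \<phi> x \<Longrightarrow> \<phi>1 x \<or> \<phi>2 x"
  shows "Pr N \<theta> \<phi> \<le> Pr N \<theta> \<phi>1 + Pr N \<theta> \<phi>2"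
proof -
  have "Pr N \<theta> \<phi> \<le> (\<integral>x. hmm_dens p0 Q f N \<theta> x * indicator {y. \<phi>1 y} x
      + hmm_dens p0 Q f N \<theta> x * indicator {y. \<phi>2 y} x \<partial>SN N)"
    unfolding Pr_def
  proof (rule Bochner_Integration.integral_mono[OF ind_int[OF th N1 ph] Bochner_Integration.integrable_add[OF ind_int[OF th N1 ph1] ind_int[OF th N1 ph2]]])
    fix x assume "x \<in> space (SN N)"
    then show "hmm_dens p0 Q f N \<theta> x * indicator {y. \<phi> y} x \<le> hmm_dens p0 Q f N \<theta> x * indicator {y. \<phi>1 y} x
      + hmm_dens p0 Q f N \<theta> x * indicator {y. \<phi>2 y} x"
      using imp hmm_nn[OF th N1, of x] by (auto simp: indicator_def)
  qed
  also have "\<dots> = Pr N \<theta> \<phi>1 + Pr N \<theta> \<phi>2"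
    unfolding Pr_def by (rule Bochner_Integration.integral_add[OF ind_int[OF th N1 ph1] ind_int[OF th N1 ph2]])
  finally show ?thesis .
qed

lemma Pr_coord:
  assumes th: "\<theta> \<in> states N" and i: "i < N" and B: "B \<in> sets MM"
  shows "Pr N \<theta> (\<lambda>y. y i \<in> B) = wt N \<theta> * massr (\<theta> i) B"
proof -
  have N1: "N \<ge> 1" using i by simp
  have "Pr N \<theta> (\<lambda>y. y i \<in> B) = enn2real (\<integral>\<^sup>+x. ennreal (hmm_dens p0 Q f N \<theta> x * indicator {y. y i \<in> B} x) \<partial>SN N)"
    unfolding Pr_def
    by (rule integral_eq_nn_integral) (use ind_int[OF th N1 comp_pred[OF i B]] hmm_nn[OF th N1] in auto)
  also have "\<dots> = enn2real (ennreal (wt N \<theta>) * ennreal (massr (\<theta> i) B))"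
    using nn_coord[OF th i B] mass_massr states_val[OF th i] by simp
  also have "\<dots> = wt N \<theta> * massr (\<theta> i) B"
    using wt_nonneg[OF th N1] massr_nn by (simp add: enn2real_mult)
  finally show ?thesis .
qed

lemma Pr_le_wt:
  assumes th: "\<theta> \<in> states N" and N1: "N \<ge> 1" and ph: "isP N \<phi>"
  shows "Pr N \<theta> \<phi> \<le> wt N \<theta>"
proof -
  have i: "0 < N" using N1 by simp
  have "Pr N \<theta> \<phi> \<le> Pr N \<theta> (\<lambda>y. y 0 \<in> space MM)"
    by (rule Pr_mono[OF th N1 ph comp_pred[OF i sets.top]]) (use space_SN i in auto)
  also have "\<dots> = wt N \<theta>" using Pr_coord[OF th i sets.top] massr_space states_val[OF th i] by simp
  finally show ?thesis .
qed

lemma Pr_dom: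
  assumes S0: "S0 \<subseteq> states N" and S1: "S1 \<subseteq> states N" and N1: "N \<ge> 1" and ph: "isP N \<phi>"
    and C: "0 \<le> C"
    and dom: "\<And>x. x \<in> space (SN N) \<Longrightarrow> \<phi> x \<Longrightarrow>
        (\<Sum>\<theta>\<in>S1. hmm_dens p0 Q f N \<theta> x) \<le> C * (\<Sum>\<theta>\<in>S0. hmm_dens p0 Q f N \<theta> x)"
  shows "(\<Sum>\<theta>\<in>S1. Pr N \<theta> \<phi>) \<le> C * (\<Sum>\<theta>\<in>S0. Pr N \<theta> \<phi>)"
proof -
  have f0: "finite S0" "finite S1" using S0 S1 finite_states finite_subset by blast+
  have int0: "integrable (SN N) (\<lambda>x. hmm_dens p0 Q f N \<theta> x * indicator {y. \<phi> y} x)" if "\<theta> \<in> S0" for \<theta>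
    using ind_int[OF _ N1 ph] S0 that by blast
  have int1: "integrable (SN N) (\<lambda>x. hmm_dens p0 Q f N \<theta> x * indicator {y. \<phi> y} x)" if "\<theta> \<in> S1" for \<theta>
    using ind_int[OF _ N1 ph] S1 that by blast
  have "(\<Sum>\<theta>\<in>S1. Pr N \<theta> \<phi>) = (\<integral>x. (\<Sum>\<theta>\<in>S1. hmm_dens p0 Q f N \<theta> x * indicator {y. \<phi> y} x) \<partial>SN N)"
    unfolding Pr_def by (rule Bochner_Integration.integral_sum[symmetric]) (rule int1)
  also have "\<dots> \<le> (\<integral>x. C * (\<Sum>\<theta>\<in>S0. hmm_dens p0 Q f N \<theta> x * indicator {y. \<phi> y} x) \<partial>SN N)"
  proof (rule Bochner_Integration.integral_mono)
    show "integrable (SN N) (\<lambda>x. \<Sum>\<theta>\<in>S1. hmm_dens p0 Q f N \<theta> x * indicator {y. \<phi> y} x)"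
      by (rule Bochner_Integration.integrable_sum) (rule int1)
    show "integrable (SN N) (\<lambda>x. C * (\<Sum>\<theta>\<in>S0. hmm_dens p0 Q f N \<theta> x * indicator {y. \<phi> y} x))"
      by (intro Bochner_Integration.integrable_mult_right Bochner_Integration.integrable_sum) (rule int0)
    fix x assume x: "x \<in> space (SN N)"
    show "(\<Sum>\<theta>\<in>S1. hmm_dens p0 Q f N \<theta> x * indicator {y. \<phi> y} x)
      \<le> C * (\<Sum>\<theta>\<in>S0. hmm_dens p0 Q f N \<theta> x * indicator {y. \<phi> y} x)"
      using dom[OF x] by (cases "\<phi> x") (auto simp: indicator_def)
  qed
  also have "\<dots> = C * (\<integral>x. (\<Sum>\<theta>\<in>S0. hmm_dens p0 Q f N \<theta> x * indicator {y. \<phi> y} x) \<partial>SN N)"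
    by (rule Bochner_Integration.integral_mult_right) (intro Bochner_Integration.integrable_sum int0)
  also have "\<dots> = C * (\<Sum>\<theta>\<in>S0. Pr N \<theta> \<phi>)"
    unfolding Pr_def by (subst Bochner_Integration.integral_sum) (auto intro: int0)
  finally show ?thesis .
qed

end

context hmmL begin

lemma prod_split_i: "i < (N::nat) \<Longrightarrow> (\<Prod>n<N. g n) = g i * (\<Prod>n\<in>{..<N} - {i}. g n)"
  using prod.remove[of "{..<N}" i g] by simp

lemma pw_dom:
  assumes i: "i < N" and jk: "j \<in> {0,1}" "k \<in> {0,1}" "j \<noteq> k" and c: "0 \<le> c"
    and le: "f j (x i) \<le> c * f k (x i)"
  shows "(\<Sum>\<theta>\<in>{\<theta>\<in>states N. \<theta> i = j}. hmm_dens p0 Q f N \<theta> x)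
    \<le> Kc * c * (\<Sum>\<theta>\<in>{\<theta>\<in>states N. \<theta> i = k}. hmm_dens p0 Q f N \<theta> x)"
proof -
  have N1: "N \<ge> 1" using i by simp
  define A where "A = {\<theta>\<in>states N. \<theta> i = j}"
  define B where "B = {\<theta>\<in>states N. \<theta> i = k}"
  have re: "(\<Sum>\<theta>\<in>B. hmm_dens p0 Q f N \<theta> x) = (\<Sum>\<theta>\<in>A. hmm_dens p0 Q f N (\<theta>(i := k)) x)"
  proof (rule sum.reindex_bij_witness[symmetric, of _ "\<lambda>\<theta>. \<theta>(i := j)" "\<lambda>\<theta>. \<theta>(i := k)"])
    fix a assume a: "a \<in> A"
    show "a(i := k, i := j) = a" using a unfolding A_def by auto
    show "a(i := k) \<in> B" using a states_upd[of a N i k] i jk unfolding A_def B_def by auto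
  next
    fix b assume b: "b \<in> B"
    show "b(i := j, i := k) = b" using b unfolding B_def by auto
    show "b(i := j) \<in> A" using b states_upd[of b N i j] i jk unfolding A_def B_def by auto
  qed simp
  have trm: "hmm_dens p0 Q f N \<theta> x \<le> Kc * c * hmm_dens p0 Q f N (\<theta>(i := k)) x" if th: "\<theta> \<in> A" for \<theta>
  proof -
    have ths: "\<theta> \<in> states N" and tj: "\<theta> i = j" using th unfolding A_def by auto
    define R where "R = (\<Prod>n\<in>{..<N} - {i}. f (\<theta> n) (x n))"
    have R0: "0 \<le> R" unfolding R_def by (rule prod_nonneg) (use f_nn states_val[OF ths] in auto)
    have R': "(\<Prod>n\<in>{..<N} - {i}. f ((\<theta>(i := k)) n) (x n)) = R"
      unfolding R_def by (rule prod.cong) auto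
    have h1: "hmm_dens p0 Q f N \<theta> x = wt N \<theta> * (f j (x i) * R)"
      unfolding hmm_eq R_def using prod_split_i[OF i, of "\<lambda>n. f (\<theta> n) (x n)"] tj by simp
    have h2: "hmm_dens p0 Q f N (\<theta>(i := k)) x = wt N (\<theta>(i := k)) * (f k (x i) * R)"
      unfolding hmm_eq using prod_split_i[OF i, of "\<lambda>n. f ((\<theta>(i := k)) n) (x n)"] R' by simp
    have w: "wt N \<theta> \<le> Kc * wt N (\<theta>(i := k))" by (rule wt_ratio[OF ths i jk(2)])
    have w0: "0 \<le> wt N \<theta>" by (rule wt_nonneg[OF ths N1])
    have fj: "0 \<le> f j (x i)" using f_nn jk by simp
    have "wt N \<theta> * (f j (x i) * R) \<le> (Kc * wt N (\<theta>(i := k))) * ((c * f k (x i)) * R)"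
      by (intro mult_mono w le mult_right_mono R0 mult_nonneg_nonneg fj)
        (use w0 c f_nn[of k] jk Kc_pos wt_nonneg[OF states_upd[OF ths i jk(2)] N1] in auto)
    also have "\<dots> = Kc * c * (wt N (\<theta>(i := k)) * (f k (x i) * R))" by (simp add: mult_ac)
    finally show ?thesis unfolding h1 h2 .
  qed
  have "(\<Sum>\<theta>\<in>A. hmm_dens p0 Q f N \<theta> x) \<le> (\<Sum>\<theta>\<in>A. Kc * c * hmm_dens p0 Q f N (\<theta>(i := k)) x)"
    by (rule sum_mono) (rule trm)
  also have "\<dots> = Kc * c * (\<Sum>\<theta>\<in>B. hmm_dens p0 Q f N \<theta> x)"
    unfolding re by (simp add: sum_distrib_left)
  finally show ?thesis unfolding A_def B_def .
qed

definition Ec :: "nat \<Rightarrow> nat \<Rightarrow> nat \<Rightarrow> ((nat \<Rightarrow> real) \<Rightarrow> bool) \<Rightarrow> real" where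
  "Ec N i a \<phi> = (\<Sum>\<theta>\<in>states N. if \<theta> i = a then Pr N \<theta> \<phi> else 0)"

lemma Ec_filter: "Ec N i a \<phi> = (\<Sum>\<theta>\<in>{\<theta>\<in>states N. \<theta> i = a}. Pr N \<theta> \<phi>)"
  unfolding Ec_def by (rule sum.inter_filter[symmetric, OF finite_states])

lemma Ec_nn: "N \<ge> 1 \<Longrightarrow> 0 \<le> Ec N i a \<phi>"
  unfolding Ec_def by (rule sum_nonneg) (auto intro: Pr_nonneg)

lemma Ec_le: assumes i: "i < N" and a: "a \<in> {0,1}" and ph: "isP N \<phi>"
  shows "Ec N i a \<phi> \<le> p0 a"
proof -
  have N1: "N \<ge> 1" using i by simp
  have "Ec N i a \<phi> \<le> (\<Sum>\<theta>\<in>states N. if \<theta> i = a then wt N \<theta> else 0)"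
    unfolding Ec_def by (rule sum_mono) (auto intro: Pr_le_wt[OF _ N1 ph])
  also have "\<dots> = p0 a" by (rule marg[OF i a])
  finally show ?thesis .
qed

lemma Ec_mono:
  assumes N1: "N \<ge> 1" and ph: "isP N \<phi>" and ph': "isP N \<phi>'"
    and imp: "\<And>x. x \<in> space (SN N) \<Longrightarrow> \<phi> x \<Longrightarrow> \<phi>' x"
  shows "Ec N i a \<phi> \<le> Ec N i a \<phi>'"
  unfolding Ec_def by (rule sum_mono) (auto intro: Pr_mono[OF _ N1 ph ph' imp])

lemma Ec_sub:
  assumes N1: "N \<ge> 1" and ph: "isP N \<phi>" and ph1: "isP N \<phi>1" and ph2: "isP N \<phi>2"
    and imp: "\<And>x. x \<in> space (SN N) \<Longrightarrow> \<phi> x \<Longrightarrow> \<phi>1 x \<or> \<phi>2 x"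
  shows "Ec N i a \<phi> \<le> Ec N i a \<phi>1 + Ec N i a \<phi>2"
  unfolding Ec_def sum.distrib[symmetric]
  by (rule sum_mono) (auto intro: Pr_sub[OF _ N1 ph ph1 ph2 imp])

lemma Ec_coord:
  assumes i: "i < N" and a: "a \<in> {0,1}" and B: "B \<in> sets MM"
  shows "Ec N i a (\<lambda>y. y i \<in> B) = p0 a * massr a B"
proof -
  have "Ec N i a (\<lambda>y. y i \<in> B) = (\<Sum>\<theta>\<in>states N. (if \<theta> i = a then wt N \<theta> else 0) * massr a B)"
    unfolding Ec_def by (rule sum.cong) (auto simp: Pr_coord[OF _ i B])
  also have "\<dots> = p0 a * massr a B" by (simp add: sum_distrib_right[symmetric] marg[OF i a])
  finally show ?thesis .
qed

lemma Ec_dom: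
  assumes i: "i < N" and jk: "j \<in> {0,1}" "k \<in> {0,1}" "j \<noteq> k" and c: "0 \<le> c"
    and ph: "isP N \<phi>"
    and le: "\<And>x. x \<in> space (SN N) \<Longrightarrow> \<phi> x \<Longrightarrow> f j (x i) \<le> c * f k (x i)"
  shows "Ec N i j \<phi> \<le> Kc * c * Ec N i k \<phi>"
  unfolding Ec_filter
proof (rule Pr_dom[OF _ _ _ ph])
  fix x assume x: "x \<in> space (SN N)" "\<phi> x"
  show "(\<Sum>\<theta>\<in>{\<theta>\<in>states N. \<theta> i = j}. hmm_dens p0 Q f N \<theta> x)
    \<le> Kc * c * (\<Sum>\<theta>\<in>{\<theta>\<in>states N. \<theta> i = k}. hmm_dens p0 Q f N \<theta> x)"
    by (rule pw_dom[where x=x, OF i jk c le[OF x]])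
qed (use i c Kc_pos in auto)

end

context hmmL begin

abbreviation "V N \<psi> \<equiv> (\<Sum>i<N. Ec N i 0 (\<lambda>y. \<psi> y i))"
abbreviation "T N \<psi> \<equiv> (\<Sum>i<N. Ec N i 1 (\<lambda>y. \<psi> y i))"

lemma ec_single: "exp_count disc p0 Q f N \<psi> {a} = (\<Sum>i<N. Ec N i a (\<lambda>y. \<psi> y i))"
  unfolding exp_count_def Ec_def Pr_def by simp

lemma ec_both: "exp_count disc p0 Q f N \<psi> {0,1} = V N \<psi> + T N \<psi>"
proof -
  have "exp_count disc p0 Q f N \<psi> {0,1} = (\<Sum>i<N. Ec N i 0 (\<lambda>y. \<psi> y i) + Ec N i 1 (\<lambda>y. \<psi> y i))"
    unfolding exp_count_def Ec_def Pr_def sum.distrib[symmetric]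
  proof (intro sum.cong refl)
    fix i \<theta> assume i: "i \<in> {..<N}" and th: "\<theta> \<in> states N"
    have "\<theta> i \<in> {0,1}" using states_val[OF th] i by simp
    then show "(if \<theta> i \<in> {0, 1} then \<integral>x. hmm_dens p0 Q f N \<theta> x * indicator {y. \<psi> y i} x \<partial>SN N else 0) =
         (if \<theta> i = 0 then \<integral>x. hmm_dens p0 Q f N \<theta> x * indicator {y. \<psi> y i} x \<partial>SN N else 0) +
         (if \<theta> i = 1 then \<integral>x. hmm_dens p0 Q f N \<theta> x * indicator {y. \<psi> y i} x \<partial>SN N else 0)"
      by auto
  qed
  then show ?thesis by (simp add: sum.distrib)
qed

lemma col_isP: "is_mtp disc N \<psi> \<Longrightarrow> i < N \<Longrightarrow> isP N (\<lambda>y. \<psi> y i)"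
  unfolding is_mtp_def by blast

lemma V_nn: "N \<ge> 1 \<Longrightarrow> 0 \<le> V N \<psi>" by (intro sum_nonneg Ec_nn)
lemma T_nn: "N \<ge> 1 \<Longrightarrow> 0 \<le> T N \<psi>" by (intro sum_nonneg Ec_nn)

lemma p1pos: "0 < p0 1" using p0pos by simp

lemma T_le: "is_mtp disc N \<psi> \<Longrightarrow> T N \<psi> \<le> real N * p0 1"
proof -
  assume m: "is_mtp disc N \<psi>"
  have "T N \<psi> \<le> (\<Sum>i<N. p0 1)" by (rule sum_mono) (auto intro: Ec_le col_isP[OF m])
  then show ?thesis by simp
qed

lemma R_le: "is_mtp disc N \<psi> \<Longrightarrow> V N \<psi> + T N \<psi> \<le> real N"
proof -
  assume m: "is_mtp disc N \<psi>"
  have "V N \<psi> \<le> (\<Sum>i<N. p0 0)" by (rule sum_mono) (auto intro: Ec_le col_isP[OF m])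
  moreover have "T N \<psi> \<le> (\<Sum>i<N. p0 1)" by (rule sum_mono) (auto intro: Ec_le col_isP[OF m])
  moreover have "real N * p0 0 + real N * p0 1 = real N" using p0sum by (simp add: distrib_left[symmetric])
  ultimately show ?thesis by simp
qed

lemma true_isP: "isP N (\<lambda>_. True)" by simp

lemma D_eq: "N \<ge> 1 \<Longrightarrow> exp_count disc p0 Q f N (\<lambda>_ _. True) {1} = real N * p0 1"
proof -
  assume N1: "N \<ge> 1"
  have "Ec N i 1 (\<lambda>_. True) = p0 1" if i: "i < N" for i
  proof -
    have P: "isP N (\<lambda>y. y i \<in> space MM)" by (rule comp_pred[OF i sets.top])
    have "Ec N i 1 (\<lambda>_. True) \<le> Ec N i 1 (\<lambda>y. y i \<in> space MM)"
      by (rule Ec_mono[OF N1 true_isP P]) (use space_SN i in auto)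
    moreover have "Ec N i 1 (\<lambda>y. y i \<in> space MM) \<le> Ec N i 1 (\<lambda>_. True)"
      by (rule Ec_mono[OF N1 P true_isP]) auto
    moreover have "Ec N i 1 (\<lambda>y. y i \<in> space MM) = p0 1"
      using Ec_coord[OF i _ sets.top, of 1] massr_space[of 1] by simp
    ultimately show ?thesis by simp
  qed
  then show ?thesis unfolding ec_single by simp
qed

lemma mTDR_eq: "N \<ge> 1 \<Longrightarrow> mTDR disc p0 Q f N \<psi> = T N \<psi> / (real N * p0 1)"
proof -
  assume N1: "N \<ge> 1"
  have "exp_count disc p0 Q f N \<psi> {1} = T N \<psi>" by (rule ec_single)
  then show ?thesis by (simp only: mTDR_def D_eq[OF N1])
qed

lemma mFDR_eq: "mFDR disc p0 Q f N \<psi> = V N \<psi> / (V N \<psi> + T N \<psi>)"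
  unfolding mFDR_def ec_both ec_single by simp

lemma fdr_iff:
  assumes "N \<ge> 1" "0 \<le> x"
  shows "mFDR disc p0 Q f N \<psi> \<le> x \<longleftrightarrow> V N \<psi> \<le> x * (V N \<psi> + T N \<psi>)"
proof -
  have v: "0 \<le> V N \<psi>" and t: "0 \<le> T N \<psi>" using V_nn T_nn assms by auto
  show ?thesis
  proof (cases "V N \<psi> + T N \<psi> = 0")
    case True
    then have "V N \<psi> = 0" using v t by simp
    then show ?thesis using True assms unfolding mFDR_eq by simp
  next
    case False
    then have "V N \<psi> + T N \<psi> > 0" using v t by simp
    then show ?thesis unfolding mFDR_eq by (simp add: divide_le_eq mult.commute)
  qed
qed

abbreviation "opt N x \<equiv> opt_TDR disc p0 Q f N x"
abbreviation "Feas N x \<equiv> {\<psi>. is_mtp disc N \<psi> \<and> mFDR disc p0 Q f N \<psi> \<le> x}"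

lemma false_mtp: "is_mtp disc N (\<lambda>_ _. False)"
  unfolding is_mtp_def by simp

lemma false_feas: "N \<ge> 1 \<Longrightarrow> 0 \<le> x \<Longrightarrow> (\<lambda>_ _. False) \<in> Feas N x"
proof -
  assume N1: "N \<ge> 1" and x: "0 \<le> x"
  have "V N (\<lambda>_ _. False) \<le> 0"
  proof (rule sum_nonpos)
    fix i assume i: "i \<in> {..<N}"
    have "Ec N i 0 (\<lambda>y. False) \<le> Ec N i 0 (\<lambda>y. y i \<in> {})"
      by (rule Ec_mono[OF N1]) (use i comp_pred[of i N "{}"] in auto)
    also have "\<dots> = 0" using Ec_coord[of i N 0 "{}"] i unfolding massr_def mass_def by simp
    finally show "Ec N i 0 (\<lambda>y. (\<lambda>_ _. False) y i) \<le> 0" by simp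
  qed
  then have "V N (\<lambda>_ _. False) = 0" using V_nn[OF N1] by (intro antisym) auto
  then show ?thesis using fdr_iff[OF N1 x] false_mtp T_nn[OF N1] x by simp
qed

lemma mTDR_le1: "N \<ge> 1 \<Longrightarrow> is_mtp disc N \<psi> \<Longrightarrow> mTDR disc p0 Q f N \<psi> \<le> 1"
  unfolding mTDR_eq using T_le p1pos by (simp add: divide_le_eq)

lemma opt_upper: "N \<ge> 1 \<Longrightarrow> \<psi> \<in> Feas N x \<Longrightarrow> mTDR disc p0 Q f N \<psi> \<le> opt N x"
  unfolding opt_TDR_def
  by (rule cSup_upper) (auto intro!: bdd_aboveI[of _ 1] mTDR_le1)

lemma opt_least: "N \<ge> 1 \<Longrightarrow> 0 \<le> x \<Longrightarrow> (\<And>\<psi>. \<psi> \<in> Feas N x \<Longrightarrow> mTDR disc p0 Q f N \<psi> \<le> b) \<Longrightarrow> opt N x \<le> b"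
  unfolding opt_TDR_def
  by (rule cSup_least) (use false_feas in auto)

lemma opt_mono: "N \<ge> 1 \<Longrightarrow> 0 \<le> x \<Longrightarrow> x \<le> y \<Longrightarrow> opt N x \<le> opt N y"
  by (rule opt_least) (auto intro: opt_upper)

end

context hmmL begin

lemma f0m[measurable]: "f 0 \<in> borel_measurable MM" using f_meas by simp
lemma f1m[measurable]: "f 1 \<in> borel_measurable MM" using f_meas by simp

definition "Lo M = {z\<in>space MM. M * f 0 z < f 1 z}"
definition "Bg M = {z\<in>space MM. 0 < f 0 z \<and> M * f 0 z \<le> f 1 z}"
definition "Z0 = {z\<in>space MM. f 0 z = 0}"
definition "Sm M = {z\<in>space MM. 0 < f 0 z \<and> f 1 z < M * f 0 z}"
definition "Le t = {z\<in>space MM. f 1 z \<le> t * f 0 z}"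

lemma Lo_sets[measurable]: "Lo M \<in> sets MM" unfolding Lo_def by measurable
lemma Bg_sets[measurable]: "Bg M \<in> sets MM" unfolding Bg_def by measurable
lemma Z0_sets[measurable]: "Z0 \<in> sets MM" unfolding Z0_def by measurable
lemma Sm_sets[measurable]: "Sm M \<in> sets MM" unfolding Sm_def by measurable
lemma Le_sets[measurable]: "Le t \<in> sets MM" unfolding Le_def by measurable

lemma LR_le_iff: "0 \<le> t \<Longrightarrow> (LR f y \<le> ereal t) \<longleftrightarrow> f 1 y \<le> t * f 0 y"
proof -
  assume t: "0 \<le> t"
  have f0: "0 \<le> f 0 y" and f1: "0 \<le> f 1 y" using f_nn by auto
  show ?thesis
  proof (cases "f 0 y = 0")
    case True
    then show ?thesis using t f1 unfolding LR_def by auto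
  next
    case False
    then have "0 < f 0 y" using f0 by simp
    then show ?thesis using False unfolding LR_def by (simp add: pos_divide_le_eq)
  qed
qed

lemma cdf_eq: "0 \<le> t \<Longrightarrow> LR_cdf disc p0 f t = p0 0 * massr 0 (Le t) + p0 1 * massr 1 (Le t)"
proof -
  assume t: "0 \<le> t"
  have "(\<integral>\<^sup>+ x. ennreal (f j x) * indicator {y. LR f y \<le> ereal t} x \<partial>MM) = mass j (Le t)" for j
    unfolding mass_def
    by (intro nn_integral_cong) (auto simp: Le_def indicator_def LR_le_iff[OF t])
  then show ?thesis unfolding LR_cdf_def massr_def by simp
qed

lemma mass_mono: "B \<subseteq> C \<Longrightarrow> mass j B \<le> mass j C"
  unfolding mass_def by (intro nn_integral_mono) (auto simp: indicator_def)

lemma POS: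
  assumes cdf_mono: "strict_mono_on {0..} (LR_cdf disc p0 f)" and M: "0 < M"
  shows "0 < massr 1 (Lo M)"
proof (rule ccontr)
  assume "\<not> 0 < massr 1 (Lo M)"
  then have "massr 1 (Lo M) = 0" using massr_nn[of 1 "Lo M"] by simp
  then have m1: "mass 1 (Lo M) = 0" using mass_massr[of 1 "Lo M"] by simp
  have "mass 0 (Lo M) \<le> (\<integral>\<^sup>+ z. ennreal (1 / M) * (ennreal (f 1 z) * indicator (Lo M) z) \<partial>MM)"
    unfolding mass_def
  proof (intro nn_integral_mono)
    fix z assume z: "z \<in> space MM"
    show "ennreal (f 0 z) * indicator (Lo M) z \<le> ennreal (1 / M) * (ennreal (f 1 z) * indicator (Lo M) z)"
    proof (cases "z \<in> Lo M")
      case True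
      then have "f 0 z \<le> 1 / M * f 1 z" using M unfolding Lo_def by (simp add: field_simps)
      then have "ennreal (f 0 z) \<le> ennreal (1 / M * f 1 z)" by (rule ennreal_leI)
      also have "\<dots> = ennreal (1 / M) * ennreal (f 1 z)" using M f_nn[of 1 z] by (intro ennreal_mult) auto
      finally show ?thesis using True by simp
    qed simp
  qed
  also have "\<dots> = ennreal (1 / M) * mass 1 (Lo M)"
    unfolding mass_def by (rule nn_integral_cmult) measurable
  finally have m0: "mass 0 (Lo M) = 0" using m1 by simp
  have eq: "mass j (Le (M + 1)) = mass j (Le M)" if j: "j \<in> {0,1}" for j
  proof (rule antisym)
    have "mass j (Le (M + 1)) \<le> (\<integral>\<^sup>+ z. ennreal (f j z) * indicator (Le M) z + ennreal (f j z) * indicator (Lo M) z \<partial>MM)"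
      unfolding mass_def
    proof (intro nn_integral_mono)
      fix z assume z: "z \<in> space MM"
      show "ennreal (f j z) * indicator (Le (M + 1)) z \<le> ennreal (f j z) * indicator (Le M) z + ennreal (f j z) * indicator (Lo M) z"
        using z by (auto simp: indicator_def Le_def Lo_def)
    qed
    also have "\<dots> = mass j (Le M) + mass j (Lo M)"
      unfolding mass_def using j by (intro nn_integral_add) (auto intro: f_meas)
    also have "mass j (Lo M) = 0" using m0 m1 j by auto
    finally show "mass j (Le (M + 1)) \<le> mass j (Le M)" by simp
    show "mass j (Le M) \<le> mass j (Le (M + 1))"
    proof (rule mass_mono)
      show "Le M \<subseteq> Le (M + 1)"
      proof
        fix z assume "z \<in> Le M"
        moreover have "0 \<le> f 0 z" using f_nn by simp
        ultimately show "z \<in> Le (M + 1)" unfolding Le_def by (auto simp: algebra_simps)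
      qed
    qed
  qed
  have "LR_cdf disc p0 f M = LR_cdf disc p0 f (M + 1)"
    using cdf_eq[of M] cdf_eq[of "M + 1"] M eq[of 0] eq[of 1] unfolding massr_def by simp
  moreover have "LR_cdf disc p0 f M < LR_cdf disc p0 f (M + 1)"
    by (rule strict_mono_onD[OF cdf_mono]) (use M in auto)
  ultimately show False by simp
qed

lemma f1_int: "integrable MM (f 1)"
  by (rule integrableI_nonneg) (use f_nn f_int in auto)

lemma massr_bochner: "j \<in> {0,1} \<Longrightarrow> B \<in> sets MM \<Longrightarrow> massr j B = (\<integral>z. f j z * indicator B z \<partial>MM)"
proof -
  assume j: "j \<in> {0,1}" and B: "B \<in> sets MM"
  have [measurable]: "f j \<in> borel_measurable MM" using f_meas j by simp
  have "(\<integral>z. f j z * indicator B z \<partial>MM) = enn2real (\<integral>\<^sup>+ z. ennreal (f j z * indicator B z) \<partial>MM)"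
    by (rule integral_eq_nn_integral) (use B f_nn j in auto)
  also have "(\<integral>\<^sup>+ z. ennreal (f j z * indicator B z) \<partial>MM) = mass j B"
    unfolding mass_def by (intro nn_integral_cong) (auto simp: indicator_def)
  finally show ?thesis unfolding massr_def by simp
qed

lemma TAU: "0 < e \<Longrightarrow> \<exists>M>0. massr 1 (Bg M) \<le> e"
proof -
  assume e: "0 < e"
  define s where "s = (\<lambda>n::nat. \<lambda>z. f 1 z * indicator (Bg (real n)) z)"
  have lim: "(\<lambda>n. integral\<^sup>L MM (s n)) \<longlonglongrightarrow> integral\<^sup>L MM (\<lambda>z. 0::real)"
  proof (rule integral_dominated_convergence[where w = "f 1"])
    show "(\<lambda>z. 0::real) \<in> borel_measurable MM" by simp
    show "s n \<in> borel_measurable MM" for n unfolding s_def by measurable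
    show "integrable MM (f 1)" by (rule f1_int)
    show "AE z in MM. (\<lambda>n. s n z) \<longlonglongrightarrow> 0"
    proof (rule AE_I2)
      fix z assume z: "z \<in> space MM"
      have "eventually (\<lambda>n. s n z = 0) sequentially"
      proof (cases "0 < f 0 z")
        case True
        obtain n0 :: nat where n0: "f 1 z / f 0 z < real n0" using reals_Archimedean2 by blast
        show ?thesis unfolding eventually_sequentially
        proof (intro exI allI impI)
          fix n assume "n0 \<le> n"
          then have "f 1 z / f 0 z < real n" using n0 by linarith
          then have "f 1 z < real n * f 0 z" using True by (simp add: pos_divide_less_eq)
          then show "s n z = 0" unfolding s_def Bg_def by auto
        qed
      next
        case False
        then show ?thesis unfolding s_def Bg_def by auto
      qed
      then show "(\<lambda>n. s n z) \<longlonglongrightarrow> 0" by (rule tendsto_eventually)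
    qed
    show "AE z in MM. norm (s n z) \<le> f 1 z" for n
      by (rule AE_I2) (use f_nn in \<open>auto simp: s_def indicator_def\<close>)
  qed
  then have "eventually (\<lambda>n. integral\<^sup>L MM (s n) < e) sequentially"
    using e by (auto dest: order_tendstoD(2))
  then obtain n0 where n0: "\<And>n. n \<ge> n0 \<Longrightarrow> integral\<^sup>L MM (s n) < e"
    unfolding eventually_sequentially by blast
  define n where "n = Suc n0"
  have "massr 1 (Bg (real n)) = integral\<^sup>L MM (s n)"
    unfolding s_def by (rule massr_bochner) auto
  also have "\<dots> < e" using n0[of n] unfolding n_def by simp
  finally show ?thesis by (intro exI[of _ "real n"]) (auto simp: n_def)
qed

lemma isP_conj: "isP N P \<Longrightarrow> isP N R \<Longrightarrow> isP N (\<lambda>y. P y \<and> R y)"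
proof -
  assume a: "isP N P" and b: "isP N R"
  have "{y\<in>space (SN N). P y \<and> R y} = {y\<in>space (SN N). P y} \<inter> {y\<in>space (SN N). R y}" by auto
  then show ?thesis unfolding pred_def using sets.Int[OF predE[OF a] predE[OF b]] by simp
qed

lemma isP_disj: "isP N P \<Longrightarrow> isP N R \<Longrightarrow> isP N (\<lambda>y. P y \<or> R y)"
proof -
  assume a: "isP N P" and b: "isP N R"
  have "{y\<in>space (SN N). P y \<or> R y} = {y\<in>space (SN N). P y} \<union> {y\<in>space (SN N). R y}" by auto
  then show ?thesis unfolding pred_def using sets.Un[OF predE[OF a] predE[OF b]] by simp
qed

lemma Ec_zero_Z0: "i < N \<Longrightarrow> Ec N i 0 (\<lambda>y. y i \<in> Z0) = 0"
proof -
  assume i: "i < N"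
  have N1: "N \<ge> 1" using i by simp
  have "Ec N i 0 (\<lambda>y. y i \<in> Z0) \<le> Kc * 0 * Ec N i 1 (\<lambda>y. y i \<in> Z0)"
    by (rule Ec_dom[OF i _ _ _ _ comp_pred[OF i Z0_sets]]) (auto simp: Z0_def)
  then show ?thesis using Ec_nn[OF N1, of i 0 "\<lambda>y. y i \<in> Z0"] by simp
qed

lemma NZ:
  assumes e: "0 < e"
  shows "\<exists>s>0. \<forall>N\<ge>1. \<forall>\<psi>. is_mtp disc N \<psi> \<and> mFDR disc p0 Q f N \<psi> \<le> s
            \<longrightarrow> mTDR disc p0 Q f N \<psi> \<le> opt N 0 + e"
proof -
  obtain M where M: "0 < M" "massr 1 (Bg M) \<le> e / 2" using TAU[of "e / 2"] e by auto
  define s where "s = e * p0 1 / (2 * Kc * M)"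
  have s: "0 < s" unfolding s_def using e p1pos Kc_pos M by simp
  have "\<forall>N\<ge>1. \<forall>\<psi>. is_mtp disc N \<psi> \<and> mFDR disc p0 Q f N \<psi> \<le> s
            \<longrightarrow> mTDR disc p0 Q f N \<psi> \<le> opt N 0 + e"
  proof (intro allI impI)
    fix N :: nat and \<psi> assume N1: "N \<ge> 1" and h: "is_mtp disc N \<psi> \<and> mFDR disc p0 Q f N \<psi> \<le> s"
    have m: "is_mtp disc N \<psi>" using h by simp
    have vs: "V N \<psi> \<le> s * (V N \<psi> + T N \<psi>)" using h fdr_iff[OF N1, of s \<psi>] s by simp
    define \<psi>0 :: "(nat \<Rightarrow> real) \<Rightarrow> nat \<Rightarrow> bool" where "\<psi>0 = (\<lambda>y i. y i \<in> Z0)"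
    have m0: "is_mtp disc N \<psi>0" unfolding is_mtp_def \<psi>0_def by (auto intro: comp_pred)
    have V0: "V N \<psi>0 = 0" unfolding \<psi>0_def using Ec_zero_Z0 by simp
    have f0: "\<psi>0 \<in> Feas N 0" using m0 fdr_iff[OF N1, of 0 \<psi>0] V0 by simp
    have opt0: "T N \<psi>0 / (real N * p0 1) \<le> opt N 0"
      using opt_upper[OF N1 f0] mTDR_eq[OF N1] by simp
    have per: "Ec N i 1 (\<lambda>y. \<psi> y i) \<le> Ec N i 1 (\<lambda>y. \<psi>0 y i) + p0 1 * (e / 2) + Kc * M * Ec N i 0 (\<lambda>y. \<psi> y i)"
      if i: "i < N" for i
    proof -
      have Pp: "isP N (\<lambda>y. \<psi> y i)" by (rule col_isP[OF m i])
      have PZ: "isP N (\<lambda>y. y i \<in> Z0)" by (rule comp_pred[OF i Z0_sets])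
      have PB: "isP N (\<lambda>y. y i \<in> Bg M)" by (rule comp_pred[OF i Bg_sets])
      have PS: "isP N (\<lambda>y. \<psi> y i \<and> y i \<in> Sm M)" by (rule isP_conj[OF Pp comp_pred[OF i Sm_sets]])
      have "Ec N i 1 (\<lambda>y. \<psi> y i) \<le> Ec N i 1 (\<lambda>y. y i \<in> Z0) + Ec N i 1 (\<lambda>y. y i \<in> Bg M \<or> (\<psi> y i \<and> y i \<in> Sm M))"
      proof (rule Ec_sub[OF N1 Pp PZ isP_disj[OF PB PS]])
        fix x assume x: "x \<in> space (SN N)" "\<psi> x i"
        have xi: "x i \<in> space MM" using space_SN[OF x(1) i] .
        have "0 \<le> f 0 (x i)" using f_nn by simp
        then show "x i \<in> Z0 \<or> x i \<in> Bg M \<or> (\<psi> x i \<and> x i \<in> Sm M)"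
          using xi x(2) unfolding Z0_def Bg_def Sm_def by auto
      qed
      also have "Ec N i 1 (\<lambda>y. y i \<in> Bg M \<or> (\<psi> y i \<and> y i \<in> Sm M))
          \<le> Ec N i 1 (\<lambda>y. y i \<in> Bg M) + Ec N i 1 (\<lambda>y. \<psi> y i \<and> y i \<in> Sm M)"
        by (rule Ec_sub[OF N1 isP_disj[OF PB PS] PB PS]) auto
      also have "Ec N i 1 (\<lambda>y. y i \<in> Bg M) \<le> p0 1 * (e / 2)"
        using Ec_coord[OF i _ Bg_sets, of 1] M(2) p1pos by simp
      also have "Ec N i 1 (\<lambda>y. \<psi> y i \<and> y i \<in> Sm M) \<le> Kc * M * Ec N i 0 (\<lambda>y. \<psi> y i \<and> y i \<in> Sm M)"
        by (rule Ec_dom[OF i _ _ _ _ PS]) (use M in \<open>auto simp: Sm_def\<close>)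
      also have "Ec N i 0 (\<lambda>y. \<psi> y i \<and> y i \<in> Sm M) \<le> Ec N i 0 (\<lambda>y. \<psi> y i)"
        by (rule Ec_mono[OF N1 PS Pp]) auto
      finally show ?thesis unfolding \<psi>0_def using Kc_pos M by (simp add: mult_left_mono)
    qed
    have "T N \<psi> \<le> (\<Sum>i<N. Ec N i 1 (\<lambda>y. \<psi>0 y i) + p0 1 * (e / 2) + Kc * M * Ec N i 0 (\<lambda>y. \<psi> y i))"
      by (rule sum_mono) (use per in auto)
    also have "\<dots> = T N \<psi>0 + real N * (p0 1 * (e / 2)) + Kc * M * V N \<psi>"
      by (simp add: sum.distrib sum_distrib_left)
    finally have Tb: "T N \<psi> \<le> T N \<psi>0 + real N * (p0 1 * (e / 2)) + Kc * M * V N \<psi>" .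
    have "V N \<psi> \<le> s * real N"
      using vs R_le[OF m] s by (meson mult_left_mono order_trans less_imp_le)
    then have "Kc * M * V N \<psi> \<le> Kc * M * (s * real N)"
      using Kc_pos M by (simp add: mult_left_mono)
    also have "Kc * M * (s * real N) = real N * (p0 1 * (e / 2))"
      unfolding s_def using Kc_pos M by (simp add: field_simps)
    finally have "T N \<psi> \<le> T N \<psi>0 + real N * p0 1 * e" using Tb by (simp add: algebra_simps)
    then have "T N \<psi> / (real N * p0 1) \<le> (T N \<psi>0 + real N * p0 1 * e) / (real N * p0 1)"
      using N1 p1pos by (intro divide_right_mono) auto
    also have "\<dots> = T N \<psi>0 / (real N * p0 1) + e"
      using N1 p1pos by (simp add: add_divide_distrib)
    finally show "mTDR disc p0 Q f N \<psi> \<le> opt N 0 + e"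
      using opt0 mTDR_eq[OF N1] by simp
  qed
  then show ?thesis using s by blast
qed

lemma sub_k:
  fixes h :: "nat \<Rightarrow> real"
  shows "finite A \<Longrightarrow> 0 \<le> sum h A \<Longrightarrow> k \<le> card A \<Longrightarrow> \<exists>S\<subseteq>A. card S = k \<and> 0 \<le> sum h S"
proof (induction "card A - k" arbitrary: A)
  case 0
  then have "card A = k" by simp
  then show ?case using 0 by blast
next
  case (Suc d)
  show ?case
  proof (cases "\<exists>a\<in>A. h a \<le> 0")
    case True
    then obtain a where a: "a \<in> A" "h a \<le> 0" by blast
    have c: "card (A - {a}) = card A - 1" using a Suc.prems by simp
    have "d = card (A - {a}) - k" using Suc.hyps(2) c by simp
    moreover have "0 \<le> sum h (A - {a})" using Suc.prems a by (simp add: sum_diff1)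
    moreover have "k \<le> card (A - {a})" using Suc.hyps(2) c by simp
    ultimately obtain S where "S \<subseteq> A - {a}" "card S = k" "0 \<le> sum h S"
      using Suc.hyps(1)[of "A - {a}"] Suc.prems by auto
    then show ?thesis by blast
  next
    case False
    obtain S where S: "S \<subseteq> A" "card S = k" using obtain_subset_with_card_n[OF Suc.prems(3)] by blast
    have "0 \<le> sum h S"
    proof (rule sum_nonneg)
      fix x assume "x \<in> S"
      then have "x \<in> A" using S by blast
      then show "0 \<le> h x" using False by force
    qed
    then show ?thesis using S by blast
  qed
qed

lemma sum_if_split:
  fixes a b :: "nat \<Rightarrow> real"
  assumes "S \<subseteq> A" "finite A"
  shows "(\<Sum>i\<in>A. if i \<in> S then a i else b i) = sum b A + (\<Sum>i\<in>S. a i - b i)"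
proof -
  have "(\<Sum>i\<in>A. if i \<in> S then a i else b i) = (\<Sum>i\<in>A. b i + (if i \<in> S then a i - b i else 0))"
    by (rule sum.cong) auto
  also have "\<dots> = sum b A + (\<Sum>i\<in>A. if i \<in> S then a i - b i else 0)" by (simp add: sum.distrib)
  also have "(\<Sum>i\<in>A. if i \<in> S then a i - b i else 0) = (\<Sum>i\<in>S. a i - b i)"
    using assms by (simp add: sum.If_cases Int_absorb1)
  finally show ?thesis .
qed

lemma FAR:
  assumes cdf_mono: "strict_mono_on {0..} (LR_cdf disc p0 f)" and x0: "0 < x0"
  shows "\<exists>\<gamma>>0. \<forall>N\<ge>2. \<forall>x\<ge>x0. \<forall>\<delta>. 0 \<le> \<delta> \<and> \<delta> \<le> \<gamma> / 2 \<longrightarrow>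
            opt N (x + \<delta>) \<le> opt N x + \<delta> / \<gamma> + 1 / real N"
proof -
  define M where "M = 2 * Kc / x0"
  have M: "0 < M" unfolding M_def using Kc_pos x0 by simp
  define c1 where "c1 = massr 1 (Lo M)"
  have c1: "0 < c1" unfolding c1_def by (rule POS[OF cdf_mono M])
  define \<gamma> where "\<gamma> = x0 * p0 1 * c1 / 2"
  have g: "0 < \<gamma>" unfolding \<gamma>_def using x0 p1pos c1 by simp
  have KM: "Kc * (1 / M) = x0 / 2" unfolding M_def using Kc_pos x0 by simp
  have main: "opt N (x + \<delta>) \<le> opt N x + \<delta> / \<gamma> + 1 / real N"
    if N2: "N \<ge> 2" and x: "x \<ge> x0" and d0: "0 \<le> \<delta>" and d1: "\<delta> \<le> \<gamma> / 2" for N x \<delta>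
  proof -
    have N1: "N \<ge> 1" using N2 by simp
    have x0': "0 \<le> x" using x x0 by simp
    have Np: "0 < real N * p0 1" using N1 p1pos by simp
    have extra: "0 \<le> \<delta> / \<gamma> + 1 / real N" using d0 g by simp
    show ?thesis
    proof (rule opt_least[OF N1])
      show "0 \<le> x + \<delta>" using x0' d0 by simp
      fix \<psi>1 assume F: "\<psi>1 \<in> Feas N (x + \<delta>)"
      have m1: "is_mtp disc N \<psi>1" using F by simp
      define v where "v = (\<lambda>i. Ec N i 0 (\<lambda>y. \<psi>1 y i))"
      define t where "t = (\<lambda>i. Ec N i 1 (\<lambda>y. \<psi>1 y i))"
      define vl where "vl = (\<lambda>i. Ec N i 0 (\<lambda>y. y i \<in> Lo M))"
      define tl where "tl = (\<lambda>i. Ec N i 1 (\<lambda>y. y i \<in> Lo M))"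
      define h where "h = (\<lambda>i. v i - x * (v i + t i))"
      define hl where "hl = (\<lambda>i. vl i - x * (vl i + tl i))"
      have V1: "V N \<psi>1 = sum v {..<N}" and T1: "T N \<psi>1 = sum t {..<N}" unfolding v_def t_def by simp_all
      have v0: "0 \<le> v i" "0 \<le> t i" "0 \<le> vl i" "0 \<le> tl i" for i
        unfolding v_def t_def vl_def tl_def using Ec_nn[OF N1] by auto
      have tle: "t i \<le> p0 1" if "i < N" for i
        unfolding t_def by (rule Ec_le[OF that _ col_isP[OF m1 that]]) simp
      have tl_eq: "tl i = p0 1 * c1" if "i < N" for i
        unfolding tl_def c1_def using Ec_coord[OF that _ Lo_sets, of 1] by simp
      have vl_le: "vl i \<le> (x0 / 2) * tl i" if i: "i < N" for i
      proof -
        have "vl i \<le> Kc * (1 / M) * tl i" unfolding vl_def tl_def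
        proof (rule Ec_dom[OF i _ _ _ _ comp_pred[OF i Lo_sets]])
          fix y assume "y \<in> space (SN N)" "y i \<in> Lo M"
          then have "M * f 0 (y i) < f 1 (y i)" unfolding Lo_def by simp
          then show "f 0 (y i) \<le> 1 / M * f 1 (y i)" using M by (simp add: field_simps)
        qed (use M in auto)
        moreover have "Kc * (1 / M) * tl i = (x0 / 2) * tl i" using KM by (simp only:)
        ultimately show ?thesis by linarith
      qed
      have hl_le: "hl i \<le> - \<gamma>" if i: "i < N" for i
      proof -
        have "hl i \<le> vl i - x * tl i" unfolding hl_def using x0' v0[of i] by (simp add: algebra_simps)
        also have "\<dots> \<le> (x0 / 2) * tl i - x0 * tl i"
          using vl_le[OF i] mult_right_mono[OF x v0(4)[of i]] by (simp add: mult.commute)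
        also have "\<dots> = - \<gamma>" unfolding \<gamma>_def tl_eq[OF i] by simp
        finally show ?thesis .
      qed
      have H1def: "sum h {..<N} = V N \<psi>1 - x * (V N \<psi>1 + T N \<psi>1)"
        unfolding h_def V1 T1 by (simp add: sum_subtractf sum_distrib_left[symmetric] sum.distrib)
      have feas1: "V N \<psi>1 \<le> (x + \<delta>) * (V N \<psi>1 + T N \<psi>1)"
        using F fdr_iff[OF N1, of "x + \<delta>" \<psi>1] x0' d0 by simp
      have R1: "V N \<psi>1 + T N \<psi>1 \<le> real N" by (rule R_le[OF m1])
      have R0: "0 \<le> V N \<psi>1 + T N \<psi>1" using V_nn[OF N1] T_nn[OF N1] by (intro add_nonneg_nonneg)
      have H1: "sum h {..<N} \<le> \<delta> * real N"
      proof -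
        have "sum h {..<N} \<le> \<delta> * (V N \<psi>1 + T N \<psi>1)" using H1def feas1 by (simp add: algebra_simps)
        also have "\<dots> \<le> \<delta> * real N" using R1 d0 by (rule mult_left_mono)
        finally show ?thesis .
      qed
      show "mTDR disc p0 Q f N \<psi>1 \<le> opt N x + \<delta> / \<gamma> + 1 / real N"
      proof (cases "sum h {..<N} \<le> 0")
        case True
        then have "V N \<psi>1 \<le> x * (V N \<psi>1 + T N \<psi>1)" using H1def by simp
        then have "\<psi>1 \<in> Feas N x" using m1 fdr_iff[OF N1 x0'] by simp
        then have "mTDR disc p0 Q f N \<psi>1 \<le> opt N x" by (rule opt_upper[OF N1])
        then show ?thesis using extra by simp
      next
        case False
        define k where "k = nat \<lceil>\<delta> * real N / \<gamma>\<rceil>"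
        have kr: "real k = of_int \<lceil>\<delta> * real N / \<gamma>\<rceil>" unfolding k_def using d0 g by simp
        have k1: "\<delta> * real N / \<gamma> \<le> real k" unfolding kr by simp
        have k2: "real k < \<delta> * real N / \<gamma> + 1" unfolding kr using ceiling_correct[of "\<delta> * real N / \<gamma>"] by linarith
        have "\<delta> * real N / \<gamma> \<le> real N / 2"
          using d1 g N1 by (simp add: divide_le_eq field_simps)
        moreover have "real N \<ge> 2" using N2 by simp
        ultimately have "real k \<le> real N" using k2 by linarith
        then have kN: "k \<le> card {..<N}" by simp
        obtain S where S: "S \<subseteq> {..<N}" "card S = k" "0 \<le> sum h S"
          using sub_k[of "{..<N}" h k] kN False by auto
        have fS: "finite S" using S(1) finite_subset by blast
        define \<psi>' :: "(nat \<Rightarrow> real) \<Rightarrow> nat \<Rightarrow> bool" where "\<psi>' = (\<lambda>y i. if i \<in> S then y i \<in> Lo M else \<psi>1 y i)"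
        have col: "(\<lambda>y. \<psi>' y i) = (if i \<in> S then (\<lambda>y. y i \<in> Lo M) else (\<lambda>y. \<psi>1 y i))" for i
          unfolding \<psi>'_def by auto
        have m': "is_mtp disc N \<psi>'"
          unfolding is_mtp_def
        proof (intro allI impI)
          fix i assume i: "i < N"
          show "(\<lambda>x. \<psi>' x i) \<in> measurable (SN N) (count_space UNIV)"
            unfolding col using comp_pred[OF i Lo_sets] col_isP[OF m1 i] by simp
        qed
        have V': "V N \<psi>' = (\<Sum>i<N. if i \<in> S then vl i else v i)"
          unfolding col vl_def v_def by (intro sum.cong) auto
        have T': "T N \<psi>' = (\<Sum>i<N. if i \<in> S then tl i else t i)"
          unfolding col tl_def t_def by (intro sum.cong) auto
        have "V N \<psi>' - x * (V N \<psi>' + T N \<psi>') = (\<Sum>i<N. (if i \<in> S then vl i else v i)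
             - x * ((if i \<in> S then vl i else v i) + (if i \<in> S then tl i else t i)))"
          unfolding V' T' by (simp add: sum_subtractf sum_distrib_left[symmetric] sum.distrib)
        also have "\<dots> = (\<Sum>i<N. if i \<in> S then hl i else h i)"
          by (rule sum.cong) (auto simp: hl_def h_def)
        also have "\<dots> = sum h {..<N} + (\<Sum>i\<in>S. hl i - h i)" by (rule sum_if_split[OF S(1)]) simp
        also have "(\<Sum>i\<in>S. hl i - h i) = sum hl S - sum h S" by (simp add: sum_subtractf)
        also have "sum hl S \<le> (\<Sum>i\<in>S. - \<gamma>)" by (rule sum_mono) (use S(1) hl_le in auto)
        also have "(\<Sum>i\<in>S. - \<gamma>) = - real k * \<gamma>" using S(2) by simp
        finally have "V N \<psi>' - x * (V N \<psi>' + T N \<psi>') \<le> sum h {..<N} + (- real k * \<gamma> - sum h S)" by simp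
        moreover have "\<delta> * real N \<le> real k * \<gamma>" using k1 g by (simp add: divide_le_eq)
        ultimately have "V N \<psi>' - x * (V N \<psi>' + T N \<psi>') \<le> 0" using H1 S(3) by simp
        then have "\<psi>' \<in> Feas N x" using m' fdr_iff[OF N1 x0'] by simp
        then have opt': "T N \<psi>' / (real N * p0 1) \<le> opt N x"
          using opt_upper[OF N1] mTDR_eq[OF N1] by metis
        have eqT: "T N \<psi>' = sum t {..<N} + (\<Sum>i\<in>S. tl i - t i)" unfolding T' by (rule sum_if_split[OF S(1)]) simp
        have geS: "(\<Sum>i\<in>S. - p0 1) \<le> (\<Sum>i\<in>S. tl i - t i)"
        proof (rule sum_mono)
          fix i assume "i \<in> S"
          then have "i < N" using S(1) by blast
          then show "- p0 1 \<le> tl i - t i" using tle[of i] v0(4)[of i] by linarith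
        qed
        have "T N \<psi>1 - real k * p0 1 \<le> T N \<psi>'" using eqT geS S(2) T1 by simp
        then have "T N \<psi>1 \<le> T N \<psi>' + real k * p0 1" by simp
        then have "T N \<psi>1 / (real N * p0 1) \<le> (T N \<psi>' + real k * p0 1) / (real N * p0 1)"
          using Np by (intro divide_right_mono) auto
        also have "\<dots> = T N \<psi>' / (real N * p0 1) + real k / real N"
          using Np p1pos by (simp add: add_divide_distrib)
        also have "real k / real N \<le> (\<delta> * real N / \<gamma> + 1) / real N"
          using k2 N1 by (intro divide_right_mono) auto
        also have "(\<delta> * real N / \<gamma> + 1) / real N = \<delta> / \<gamma> + 1 / real N"
          using N1 by (simp add: add_divide_distrib)
        finally show ?thesis using opt' mTDR_eq[OF N1] by simp
      qed
    qed
  qed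
  show ?thesis using g main by blast
qed

end

context hmmL begin

lemma UC:
  assumes cdf_mono: "strict_mono_on {0..} (LR_cdf disc p0 f)" and e: "0 < e"
  shows "\<exists>\<delta>>0. \<exists>N0. \<forall>N\<ge>N0. \<forall>x\<ge>0. \<forall>d. 0 \<le> d \<and> d \<le> \<delta> \<longrightarrow> opt N (x + d) \<le> opt N x + e"
proof -
  obtain s where s: "0 < s" and sN: "\<And>N \<psi>. N \<ge> 1 \<Longrightarrow> is_mtp disc N \<psi> \<Longrightarrow> mFDR disc p0 Q f N \<psi> \<le> s
            \<Longrightarrow> mTDR disc p0 Q f N \<psi> \<le> opt N 0 + e"
    using NZ[OF e] by blast
  define x0 where "x0 = s / 2"
  have x0: "0 < x0" unfolding x0_def using s by simp
  obtain \<gamma> where g: "0 < \<gamma>" and gF: "\<And>N x \<delta>. N \<ge> 2 \<Longrightarrow> x \<ge> x0 \<Longrightarrow> 0 \<le> \<delta> \<Longrightarrow> \<delta> \<le> \<gamma> / 2 \<Longrightarrow>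
            opt N (x + \<delta>) \<le> opt N x + \<delta> / \<gamma> + 1 / real N"
    using FAR[OF cdf_mono x0] by blast
  define \<delta> where "\<delta> = min x0 (min (\<gamma> / 2) (\<gamma> * e / 2))"
  have d: "0 < \<delta>" unfolding \<delta>_def using x0 g e by simp
  obtain n0 :: nat where n0: "2 / e < real n0" using reals_Archimedean2 by blast
  define N0 where "N0 = max 2 n0"
  have "\<forall>N\<ge>N0. \<forall>x\<ge>0. \<forall>d. 0 \<le> d \<and> d \<le> \<delta> \<longrightarrow> opt N (x + d) \<le> opt N x + e"
  proof (intro allI impI)
    fix N :: nat and x d :: real assume N: "N \<ge> N0" and x: "0 \<le> x" and dd: "0 \<le> d \<and> d \<le> \<delta>"
    have N2: "N \<ge> 2" using N unfolding N0_def by simp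
    have N1: "N \<ge> 1" using N2 by simp
    show "opt N (x + d) \<le> opt N x + e"
    proof (cases "x \<ge> x0")
      case True
      have "opt N (x + d) \<le> opt N x + d / \<gamma> + 1 / real N"
      proof (rule gF[OF N2 True])
        show "0 \<le> d" using dd by simp
        have "\<delta> \<le> \<gamma> / 2" unfolding \<delta>_def by simp
        then show "d \<le> \<gamma> / 2" using dd by linarith
      qed
      moreover have "d / \<gamma> \<le> e / 2"
      proof -
        have "\<delta> \<le> \<gamma> * e / 2" unfolding \<delta>_def by simp
        then have "d \<le> \<gamma> * e / 2" using dd by linarith
        then show ?thesis using g by (simp add: divide_le_eq mult.commute)
      qed
      moreover have "1 / real N \<le> e / 2"
      proof -
        have "real n0 \<le> real N" using N unfolding N0_def by simp
        then have "2 / e < real N" using n0 by simp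
        then show ?thesis using e N1 by (simp add: field_simps)
      qed
      ultimately show ?thesis by linarith
    next
      case False
      have "\<delta> \<le> x0" unfolding \<delta>_def by simp
      then have xd: "x + d \<le> s" using False dd unfolding x0_def by linarith
      have "opt N (x + d) \<le> opt N 0 + e"
      proof (rule opt_least[OF N1])
        show "0 \<le> x + d" using x dd by simp
        fix \<psi> assume F: "\<psi> \<in> Feas N (x + d)"
        then have m: "is_mtp disc N \<psi>" and le: "mFDR disc p0 Q f N \<psi> \<le> x + d" by simp_all
        have "mFDR disc p0 Q f N \<psi> \<le> s" using le xd by linarith
        then show "mTDR disc p0 Q f N \<psi> \<le> opt N 0 + e" by (rule sN[OF N1 m])
      qed
      also have "opt N 0 \<le> opt N x" by (rule opt_mono[OF N1 _ x]) simp
      finally show ?thesis by simp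
    qed
  qed
  then show ?thesis using d by blast
qed

end

theorem lemma22:
  fixes disc :: bool and p0 :: "nat \<Rightarrow> real" and Q :: "nat \<Rightarrow> nat \<Rightarrow> real"
    and f :: "nat \<Rightarrow> real \<Rightarrow> real" and xN yN :: "nat \<Rightarrow> real"
  assumes dens: "\<forall>j\<in>{0,1::nat}. is_density disc (f j)"
    and A1: "A1 disc f"
    and A2: "A2 Q p0"
    and cdf_cont: "continuous_on UNIV (LR_cdf disc p0 f)"
    and cdf_mono: "strict_mono_on {0..} (LR_cdf disc p0 f)"
    and x_nonneg: "\<forall>N. 0 \<le> xN N" and y_nonneg: "\<forall>N. 0 \<le> yN N"
    and diff: "(\<lambda>N. \<bar>xN N - yN N\<bar>) \<longlonglongrightarrow> 0"
  shows "(\<lambda>N. \<bar>opt_TDR disc p0 Q f N (xN N) - opt_TDR disc p0 Q f N (yN N)\<bar>) \<longlonglongrightarrow> 0"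
proof -
  interpret H: hmmL disc p0 Q f using dens A2 by unfold_locales
  show ?thesis
  proof (rule LIMSEQ_I)
    fix r :: real assume r: "0 < r"
    have "\<exists>\<delta>>0. \<exists>N0. \<forall>N\<ge>N0. \<forall>x\<ge>0. \<forall>d. 0 \<le> d \<and> d \<le> \<delta> \<longrightarrow>
        opt_TDR disc p0 Q f N (x + d) \<le> opt_TDR disc p0 Q f N x + r / 2"
      by (rule H.UC[OF cdf_mono]) (use r in simp)
    then obtain \<delta> N0 where d: "0 < \<delta>" and uc0: "\<forall>N\<ge>N0. \<forall>x\<ge>0. \<forall>d. 0 \<le> d \<and> d \<le> \<delta> \<longrightarrow>
        opt_TDR disc p0 Q f N (x + d) \<le> opt_TDR disc p0 Q f N x + r / 2"
      by blast
    have uc: "opt_TDR disc p0 Q f N (x + d) \<le> opt_TDR disc p0 Q f N x + r / 2"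
      if "N \<ge> N0" "0 \<le> x" "0 \<le> d" "d \<le> \<delta>" for N x d
      using uc0 that by blast
    obtain N1 where N1: "\<forall>N\<ge>N1. norm (\<bar>xN N - yN N\<bar> - 0) < \<delta>"
      using LIMSEQ_D[OF diff d] by blast
    show "\<exists>no. \<forall>n\<ge>no. norm (\<bar>opt_TDR disc p0 Q f n (xN n) - opt_TDR disc p0 Q f n (yN n)\<bar> - 0) < r"
    proof (intro exI allI impI)
      fix n assume n: "n \<ge> max (max N0 N1) 1"
      have n1: "n \<ge> 1" using n by simp
      define a where "a = min (xN n) (yN n)"
      define b where "b = max (xN n) (yN n)"
      have a0: "0 \<le> a" unfolding a_def using x_nonneg y_nonneg by simp
      have ab: "a \<le> b" unfolding a_def b_def by simp
      have ba: "b - a = \<bar>xN n - yN n\<bar>" unfolding a_def b_def by (cases "xN n \<le> yN n") (simp_all add: max_def min_def)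
      have "n \<ge> N1" using n by simp
      then have "\<bar>xN n - yN n\<bar> < \<delta>" using N1 by simp
      then have bd: "b - a \<le> \<delta>" using ba by simp
      have u: "opt_TDR disc p0 Q f n b \<le> opt_TDR disc p0 Q f n a + r / 2"
      proof -
        have "n \<ge> N0" using n by simp
        then have "opt_TDR disc p0 Q f n (a + (b - a)) \<le> opt_TDR disc p0 Q f n a + r / 2"
          using uc[of n a "b - a"] a0 ab bd by simp
        then show ?thesis by simp
      qed
      have l: "opt_TDR disc p0 Q f n a \<le> opt_TDR disc p0 Q f n b" by (rule H.opt_mono[OF n1 a0 ab])
      have "\<bar>opt_TDR disc p0 Q f n (xN n) - opt_TDR disc p0 Q f n (yN n)\<bar>
          = \<bar>opt_TDR disc p0 Q f n b - opt_TDR disc p0 Q f n a\<bar>"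
      proof (cases "xN n \<le> yN n")
        case True
        then have "a = xN n" "b = yN n" unfolding a_def b_def by simp_all
        then show ?thesis by (simp add: abs_minus_commute)
      next
        case False
        then have "a = yN n" "b = xN n" unfolding a_def b_def by simp_all
        then show ?thesis by simp
      qed
      also have "\<dots> \<le> r / 2" using u l by simp
      finally show "norm (\<bar>opt_TDR disc p0 Q f n (xN n) - opt_TDR disc p0 Q f n (yN n)\<bar> - 0) < r"
        using r by simp
    qed
  qed
qed

end
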